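(* Let $S$ be an instance of SCS-RC and let $T$ be the set of strings computed by \textsf{MGREEDY-RC} on input $S$. Then $\mathrm{OPT}(T) \le \mathrm{OPT}(S) + w(\mathrm{CYC}(G_S)) \le 2\,\mathrm{OPT}(S)$.
   Context: Alphabet $\Sigma=\{\texttt a,\texttt t,\texttt g,\texttt c\}$ with complement $\bar{\texttt a}=\texttt t$, $\bar{\texttt t}=\texttt a$, $\bar{\texttt g}=\texttt c$, $\bar{\texttt c}=\texttt g$; the reverse complement of $s=b_1\cdots b_n$ is $\bar{s}^R=\bar{b_n}\cdots\bar{b_1}$, and $\bar S^R=\{\bar s^R: s\in S\}$. An instance of SCS-RC is a finite set $S=\{s_1,\dots,s_m\}$ of strings over $\Sigma$ such that no string of $S\cup\bar S^R$ is a substring of another; for a finite set $U$ of strings, $\mathrm{OPT}(U)$ is the minimum length of a string containing, for each $u\in U$, $u$ or $\bar u^R$ as a substring. For strings $x,y$, $\mathrm{ov}(x,y)$ is the length of the longest $v$ with $x=uv$, $y=vw$ for nonempty $u,w$; $\mathrm{pref}(x,y)=u$; $\mathrm{dist}(x,y)=|x|-\mathrm{ov}(x,y)$; $\langle x,y\rangle=\mathrm{pref}(x,y)\,y$. The distance graph $G_S$ is the complete directed graph (with loops) on $S\cup\bar S^R$ with edge weights $\mathrm{dist}(x,y)$; a cycle $x_1,\dots,x_r,x_1$ (distinct vertices) has weight $\sum_{i}\mathrm{dist}(x_i,x_{i+1})$ with $x_{r+1}=x_1$; a cycle cover is a set of vertex-disjoint cycles containing exactly one of $s_i,\bar{s_i}^R$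 for each $i$; $w(\mathrm{CYC}(G_S))$ denotes the minimum total weight of a cycle cover of $G_S$. \textsf{MGREEDY-RC} on $S$: set $T=\emptyset$; while $S\ne\emptyset$: among pairs $(x,y)\in (S\cup\bar S^R)^2$ with $x=y$, or with $x\ne y$ and $\bar x^R\ne y$, pick one maximizing $\mathrm{ov}(x,y)$ (ties arbitrary); if $x=y$, remove $x,\bar x^R$ from $S$ and add $x$ to $T$; otherwise remove $x,\bar x^R,y,\bar y^R$ from $S$ and add $\langle x,y\rangle$ to $S$. The resulting set is $T$. *)

theory Defs
  imports Main "HOL-Library.Sublist"
begin

datatype base = Ba | Bt | Bg | Bc

fun comp :: "base \<Rightarrow> base" where
  "comp Ba = Bt" | "comp Bt = Ba" | "comp Bg = Bc" | "comp Bc = Bg"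

type_synonym dna = "base list"

definition rc :: "dna \<Rightarrow> dna" where
  "rc s = rev (map comp s)"

definition verts :: "dna set \<Rightarrow> dna set" where
  "verts S = S \<union> rc ` S"

definition scs_rc_instance :: "dna set \<Rightarrow> bool" where
  "scs_rc_instance S \<longleftrightarrow> finite S \<and>
     (\<forall>x\<in>verts S. \<forall>y\<in>verts S. x \<noteq> y \<longrightarrow> \<not> sublist x y)"

text \<open>ov x y: length of the longest v with x = u v, y = v w, u and w nonempty.
  (0 is inserted only to make the value total for empty strings.)\<close>
definition ov :: "dna \<Rightarrow> dna \<Rightarrow> nat" where
  "ov x y = Max (insert 0 {k. k < length x \<and> k < length y \<and>
                               drop (length x - k) x = take k y})"

definition pref :: "dna \<Rightarrow> dna \<Rightarrow> dna" where
  "pref x y = take (length x - ov x y) x"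

definition dist :: "dna \<Rightarrow> dna \<Rightarrow> nat" where
  "dist x y = length x - ov x y"

definition merge :: "dna \<Rightarrow> dna \<Rightarrow> dna" where
  "merge x y = pref x y @ y"

definition covers_rc :: "dna set \<Rightarrow> dna \<Rightarrow> bool" where
  "covers_rc U s \<longleftrightarrow> (\<forall>u\<in>U. sublist u s \<or> sublist (rc u) s)"

definition OPT :: "dna set \<Rightarrow> nat" where
  "OPT U = (LEAST n. \<exists>s. length s = n \<and> covers_rc U s)"

text \<open>A cycle x_1,...,x_r,x_1 is represented by the nonempty list [x_1,...,x_r].\<close>
definition cycle_weight :: "dna list \<Rightarrow> nat" where
  "cycle_weight xs = (\<Sum>i<length xs. dist (xs ! i) (xs ! ((i + 1) mod length xs)))"

definition is_cycle_cover :: "dna set \<Rightarrow> dna list list \<Rightarrow> bool" where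
  "is_cycle_cover S C \<longleftrightarrow>
     (\<forall>c\<in>set C. c \<noteq> []) \<and>
     distinct (concat C) \<and>
     set (concat C) \<subseteq> verts S \<and>
     (\<forall>s\<in>S. (s \<in> set (concat C) \<or> rc s \<in> set (concat C)) \<and>
             (s \<noteq> rc s \<longrightarrow> \<not> (s \<in> set (concat C) \<and> rc s \<in> set (concat C))))"

definition cover_weight :: "dna list list \<Rightarrow> nat" where
  "cover_weight C = (\<Sum>c\<leftarrow>C. cycle_weight c)"

definition wCYC :: "dna set \<Rightarrow> nat" where
  "wCYC S = (LEAST w. \<exists>C. is_cycle_cover S C \<and> cover_weight C = w)"

definition cand :: "dna set \<Rightarrow> (dna \<times> dna) set" where
  "cand S = {(x, y). x \<in> verts S \<and> y \<in> verts S \<and> (x = y \<or> (x \<noteq> y \<and> rc x \<noteq> y))}"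

definition max_pair :: "dna set \<Rightarrow> dna \<Rightarrow> dna \<Rightarrow> bool" where
  "max_pair S x y \<longleftrightarrow> (x, y) \<in> cand S \<and> (\<forall>(x', y')\<in>cand S. ov x' y' \<le> ov x y)"

text \<open>mgreedy_run S T R: starting from current set S and output set T, some run of
  the algorithm (with arbitrary tie-breaking) terminates with output R.\<close>
inductive mgreedy_run :: "dna set \<Rightarrow> dna set \<Rightarrow> dna set \<Rightarrow> bool" where
  stop: "mgreedy_run {} T T"
| loop: "\<lbrakk> S \<noteq> {}; max_pair S x x;
           mgreedy_run (S - {x, rc x}) (insert x T) R \<rbrakk> \<Longrightarrow> mgreedy_run S T R"
| join: "\<lbrakk> S \<noteq> {}; max_pair S x y; x \<noteq> y;
           mgreedy_run ((S - {x, rc x, y, rc y}) \<union> {merge x y}) T R \<rbrakk> \<Longrightarrow> mgreedy_run S T R"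

definition mgreedy_rc :: "dna set \<Rightarrow> dna set \<Rightarrow> bool" where
  "mgreedy_rc S T \<longleftrightarrow> mgreedy_run S {} T"

end

theory Submission
  imports Defs "HOL-Library.Multiset"
begin

lemma comp_comp[simp]: "comp (comp b) = b" by (cases b) auto

lemma rc_rc[simp]: "rc (rc x) = x" by (simp add: rc_def rev_map comp_def)

lemma length_rc[simp]: "length (rc x) = length x" by (simp add: rc_def)

lemma rc_append[simp]: "rc (a @ b) = rc b @ rc a" by (simp add: rc_def)

lemma rc_Nil[simp]: "rc [] = []" by (simp add: rc_def)

lemma rc_inj[simp]: "rc a = rc b \<longleftrightarrow> a = b" by (metis rc_rc)

lemma rc_take: "rc (take k y) = drop (length y - k) (rc y)"
  unfolding rc_def by (metis length_map rev_take take_map)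

lemma rc_drop: "rc (drop k y) = take (length y - k) (rc y)"
  unfolding rc_def by (metis length_map rev_drop drop_map)

lemma sublist_rc: "sublist a b \<Longrightarrow> sublist (rc a) (rc b)"
  by (auto simp: sublist_def) (metis append_assoc rc_append)

lemma sublist_rc_iff: "sublist (rc a) (rc b) \<longleftrightarrow> sublist a b"
  by (metis rc_rc sublist_rc)

lemma prefix_rc: "prefix a b \<Longrightarrow> suffix (rc a) (rc b)"
  by (auto simp: prefix_def suffix_def)

lemma suffix_rc: "suffix a b \<Longrightarrow> prefix (rc a) (rc b)"
  by (auto simp: prefix_def suffix_def)

definition ovp :: "dna \<Rightarrow> dna \<Rightarrow> nat \<Rightarrow> bool" where
  "ovp x y k \<longleftrightarrow> k < length x \<and> k < length y \<and> drop (length x - k) x = take k y"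

lemma ov_alt: "ov x y = Max (insert 0 {k. ovp x y k})"
  by (simp add: ov_def ovp_def)

lemma ovp_fin: "finite {k. ovp x y k}"
  by (rule finite_subset[of _ "{..<length x}"]) (auto simp: ovp_def)

lemma ov_ge: "ovp x y k \<Longrightarrow> k \<le> ov x y"
  unfolding ov_alt using ovp_fin by (intro Max_ge) auto

lemma ov_cases: "ov x y = 0 \<or> ovp x y (ov x y)"
proof -
  have "ov x y \<in> insert 0 {k. ovp x y k}"
    unfolding ov_alt using ovp_fin by (intro Max_in) auto
  then show ?thesis by auto
qed

lemma ov_le1: "ov x y \<le> length x"
  using ov_cases[of x y] by (auto simp: ovp_def)

lemma ov_le2: "ov x y \<le> length y"
  using ov_cases[of x y] by (auto simp: ovp_def)

lemma ov_lt1: "x \<noteq> [] \<Longrightarrow> ov x y < length x"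
  using ov_cases[of x y] by (auto simp: ovp_def)

lemma ov_lt2: "y \<noteq> [] \<Longrightarrow> ov x y < length y"
  using ov_cases[of x y] by (auto simp: ovp_def)

lemma ov_eq: "drop (length x - ov x y) x = take (ov x y) y"
  using ov_cases[of x y] by (auto simp: ovp_def)

lemma ovp_rc: "ovp (rc y) (rc x) k \<longleftrightarrow> ovp x y k"
proof -
  have "drop (length y - k) (rc y) = rc (take k y)" by (simp add: rc_take)
  moreover have "take k (rc x) = rc (drop (length x - k) x)"
    by (cases "k \<le> length x") (simp_all add: rc_drop)
  ultimately show ?thesis unfolding ovp_def by auto
qed

lemma ov_rc: "ov (rc y) (rc x) = ov x y"
  unfolding ov_alt ovp_rc ..

lemma merge_eq: "merge x y = x @ drop (ov x y) y"
proof -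
  have "x = take (length x - ov x y) x @ drop (length x - ov x y) x" by simp
  also have "\<dots> = take (length x - ov x y) x @ take (ov x y) y" using ov_eq by simp
  finally have "x @ drop (ov x y) y = take (length x - ov x y) x @ y"
    by (metis append_assoc append_take_drop_id)
  then show ?thesis by (simp add: merge_def pref_def)
qed

lemma length_merge: "length (merge x y) = length x + length y - ov x y"
  using ov_le2[of x y] by (simp add: merge_eq)

lemma merge_eq2: "merge x y = take (length x - ov x y) x @ y"
  by (simp add: merge_def pref_def)

lemma rc_merge: "rc (merge x y) = merge (rc y) (rc x)"
proof -
  have "rc (merge x y) = rc (drop (ov x y) y) @ rc x" by (simp add: merge_eq)
  also have "\<dots> = take (length y - ov x y) (rc y) @ rc x" by (simp add: rc_drop)
  also have "\<dots> = merge (rc y) (rc x)" by (simp add: merge_eq2 ov_rc)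
  finally show ?thesis .
qed

lemma prefix_merge: "prefix x (merge x y)" by (simp add: merge_eq)
lemma suffix_merge: "suffix y (merge x y)" by (auto simp: merge_eq2 suffix_def)

lemma dist_ov: "dist x y + ov x y = length x"
  using ov_le1[of x y] by (simp add: dist_def)

lemma ovp_nth: "ovp x y k \<Longrightarrow> j < k \<Longrightarrow> x ! (length x - k + j) = y ! j"
proof -
  assume p: "ovp x y k" and j: "j < k"
  have "x ! (length x - k + j) = drop (length x - k) x ! j"
    by simp
  also have "\<dots> = take k y ! j" using p unfolding ovp_def by (simp only:)
  also have "\<dots> = y ! j" using j by simp
  finally show ?thesis .
qed

lemma monge:
  assumes a: "ov x y' \<le> ov x y" and b: "ov x' y \<le> ov x y"
  shows "ov x y' + ov x' y \<le> ov x y + ov x' y'"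
proof -
  define A where "A = ov x y'"
  define B where "B = ov x' y"
  define C where "C = ov x y"
  show ?thesis
  proof (cases "A = 0 \<or> B = 0 \<or> A + B \<le> C")
    case True then show ?thesis using a b A_def B_def C_def by auto
  next
    case False
    then have pA: "ovp x y' A" and pB: "ovp x' y B" using ov_cases A_def B_def by metis+
    have "C \<noteq> 0" using False a b A_def B_def C_def by auto
    then have pC: "ovp x y C" using ov_cases C_def by metis
    define K where "K = A + B - C"
    have KA: "K \<le> A" and KB: "K \<le> B" using False a b K_def A_def B_def C_def by auto
    have "ovp x' y' K"
      unfolding ovp_def
    proof (intro conjI)
      show "K < length x'" using pB KB by (auto simp: ovp_def)
      show "K < length y'" using pA KA by (auto simp: ovp_def)
      show "drop (length x' - K) x' = take K y'"
      proof (rule nth_equalityI)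
        show "length (drop (length x' - K) x') = length (take K y')"
          using pB KB pA KA by (auto simp: ovp_def)
      next
        fix i assume "i < length (drop (length x' - K) x')"
        then have i: "i < K" using pB KB by (auto simp: ovp_def)
        have lx: "B < length x'" using pB by (simp add: ovp_def)
        have idx: "length x' - K + i = length x' - B + (B - K + i)" using KB lx by simp
        have e1: "x' ! (length x' - B + (B - K + i)) = y ! (B - K + i)"
          by (rule ovp_nth[OF pB]) (use i KB in simp)
        have idx2: "B - K + i = C - A + i" using K_def False a b A_def B_def C_def by auto
        have e2: "x ! (length x - C + (C - A + i)) = y ! (C - A + i)"
          by (rule ovp_nth[OF pC]) (use i KA a A_def C_def in simp)
        have idx3: "length x - C + (C - A + i) = length x - A + i"
          using pC a A_def C_def by (simp add: ovp_def)
        have e3: "x ! (length x - A + i) = y' ! i"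
          by (rule ovp_nth[OF pA]) (use i KA in simp)
        have "drop (length x' - K) x' ! i = x' ! (length x' - K + i)"
          using KB lx by simp
        also have "\<dots> = x' ! (length x' - B + (B - K + i))" by (simp only: idx)
        also have "\<dots> = y ! (B - K + i)" by (rule e1)
        also have "\<dots> = y ! (C - A + i)" by (simp only: idx2)
        also have "\<dots> = x ! (length x - C + (C - A + i))" by (rule e2[symmetric])
        also have "\<dots> = x ! (length x - A + i)" by (simp only: idx3)
        also have "\<dots> = y' ! i" by (rule e3)
        also have "\<dots> = take K y' ! i" using i by simp
        finally show "drop (length x' - K) x' ! i = take K y' ! i" .
      qed
    qed
    then have "K \<le> ov x' y'" by (rule ov_ge)
    then show ?thesis using K_def A_def B_def C_def False a b by auto
  qed
qed

lemma ov_suffix_mono: "suffix y x' \<Longrightarrow> ov y z \<le> ov x' z"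
proof -
  assume s: "suffix y x'"
  show ?thesis
  proof (cases "ov y z = 0")
    case False
    then have p: "ovp y z (ov y z)" using ov_cases by metis
    obtain w where x': "x' = w @ y" using s by (auto simp: suffix_def)
    have "ovp x' z (ov y z)" using p unfolding ovp_def x' by auto
    then show ?thesis by (rule ov_ge)
  qed simp
qed

lemma ov_prefix_mono: "prefix x y' \<Longrightarrow> ov z x \<le> ov z y'"
proof -
  assume s: "prefix x y'"
  show ?thesis
  proof (cases "ov z x = 0")
    case False
    then have p: "ovp z x (ov z x)" using ov_cases by metis
    obtain w where y': "y' = x @ w" using s by (auto simp: prefix_def)
    have "ovp z y' (ov z x)" using p unfolding ovp_def y' by auto
    then show ?thesis by (rule ov_ge)
  qed simp
qed

lemma ov_merge_self: "ov y x \<le> ov (merge x y) (merge x y)"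
proof (cases "ov y x = 0")
  case False
  then have p: "ovp y x (ov y x)" using ov_cases by metis
  define m where "m = merge x y"
  obtain w where m1: "m = x @ w" using prefix_merge[of x y] m_def by (auto simp: prefix_def)
  obtain w' where m2: "m = w' @ y" using suffix_merge[of y x] m_def by (auto simp: suffix_def)
  have "ovp m m (ov y x)"
    unfolding ovp_def
  proof (intro conjI)
    show "ov y x < length m" using p m1 by (auto simp: ovp_def)
    show "ov y x < length m" using p m1 by (auto simp: ovp_def)
    have "drop (length m - ov y x) m = drop (length y - ov y x) y"
      using p m2 by (auto simp: ovp_def)
    also have "\<dots> = take (ov y x) x" using p by (simp add: ovp_def)
    also have "\<dots> = take (ov y x) m" using p m1 by (auto simp: ovp_def)
    finally show "drop (length m - ov y x) m = take (ov y x) m" .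
  qed
  then show ?thesis using ov_ge m_def by blast
qed simp

definition occ :: "dna \<Rightarrow> dna \<Rightarrow> nat \<Rightarrow> bool" where
  "occ z m q \<longleftrightarrow> q + length z \<le> length m \<and> take (length z) (drop q m) = z"

lemma sublist_occ: "sublist z m \<longleftrightarrow> (\<exists>q. occ z m q)"
proof
  assume "sublist z m"
  then obtain p s where "m = p @ z @ s" by (auto simp: sublist_def)
  then have "occ z m (length p)" by (simp add: occ_def)
  then show "\<exists>q. occ z m q" ..
next
  assume "\<exists>q. occ z m q"
  then obtain q where o: "occ z m q" ..
  have "sublist (take (length z) (drop q m)) m"
    by (meson sublist_drop sublist_order.dual_order.trans sublist_take)
  then show "sublist z m" using o by (simp add: occ_def)
qed

lemma occ_append_cases:
  assumes o: "occ z (a @ b) q"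
  shows "(q + length z \<le> length a \<and> sublist z a) \<or> (length a \<le> q \<and> sublist z b) \<or>
         (q < length a \<and> length a < q + length z \<and> drop q a = take (length a - q) z)"
proof -
  have L: "q + length z \<le> length a + length b" and E: "take (length z) (drop q (a @ b)) = z"
    using o by (auto simp: occ_def)
  consider "q + length z \<le> length a" | "length a \<le> q" | "q < length a \<and> length a < q + length z"
    by linarith
  then show ?thesis
  proof cases
    case 1
    then have "take (length z) (drop q a) = z" using E by simp
    then have "occ z a q" using 1 by (simp add: occ_def)
    then show ?thesis using 1 sublist_occ by blast
  next
    case 2
    then have "take (length z) (drop (q - length a) b) = z" using E by simp
    then have "occ z b (q - length a)" using 2 L by (simp add: occ_def)
    then show ?thesis using 2 sublist_occ by blast
  next
    case 3
    have "take (length a - q) z = take (length a - q) (take (length z) (drop q (a @ b)))"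
      using E by simp
    also have "\<dots> = drop q a"
    proof -
      have "length a - q \<le> length z" using 3 by linarith
      then show ?thesis using 3 by (simp add: min_def)
    qed
    finally show ?thesis using 3 by simp
  qed
qed

definition sf :: "dna set \<Rightarrow> bool" where
  "sf A \<longleftrightarrow> (\<forall>x\<in>A. \<forall>y\<in>A. x \<noteq> y \<longrightarrow> \<not> sublist x y)"

lemma sfD: "sf A \<Longrightarrow> x \<in> A \<Longrightarrow> y \<in> A \<Longrightarrow> sublist x y \<Longrightarrow> x = y"
  by (auto simp: sf_def)

lemma sublist_same_len: "sublist x y \<Longrightarrow> length y \<le> length x \<Longrightarrow> x = y"
  by (auto simp: sublist_def)

lemma verts_rc: "x \<in> verts S \<Longrightarrow> rc x \<in> verts S"
  by (auto simp: verts_def)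

lemma cand_iff: "(x, y) \<in> cand S \<longleftrightarrow> x \<in> verts S \<and> y \<in> verts S \<and> (x = y \<or> rc x \<noteq> y)"
  by (auto simp: cand_def)

lemma max_pairD: "max_pair S x y \<Longrightarrow> (x', y') \<in> cand S \<Longrightarrow> ov x' y' \<le> ov x y"
  by (auto simp: max_pair_def)

lemma max_pair_rc: "max_pair S x y \<Longrightarrow> max_pair S (rc y) (rc x)"
  unfolding max_pair_def cand_iff by (auto simp: ov_rc verts_rc)

lemma span:
  assumes "sublist z (merge x y)"
  shows "sublist z x \<or> sublist z y \<or>
    (\<exists>k. ov x y < k \<and> k \<le> length x \<and> k < length z \<and> drop (length x - k) x = take k z)"
proof -
  obtain q where o: "occ z (merge x y) q" using assms sublist_occ by blast
  have o1: "occ z (x @ drop (ov x y) y) q" using o by (simp add: merge_eq)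
  have o2: "occ z (take (length x - ov x y) x @ y) q" using o by (simp add: merge_eq2)
  have lo: "ov x y \<le> length x" by (rule ov_le1)
  show ?thesis
  proof (cases "q < length x - ov x y")
    case False
    have "sublist z y"
    proof -
      from occ_append_cases[OF o2] consider
        "q + length z \<le> length (take (length x - ov x y) x)" | "sublist z y" | 
        "q < length (take (length x - ov x y) x)" by blast
      then show ?thesis
      proof cases
        case 1
        have "length (take (length x - ov x y) x) = length x - ov x y" using lo by simp
        then have "length z = 0" using 1 False by linarith
        then have "z = []" by simp
        then show ?thesis by simp
      next
        case 3 then show ?thesis using False lo by simp
      qed simp
    qed
    then show ?thesis by simp
  next
    case True
    from occ_append_cases[OF o1] show ?thesis
    proof (elim disjE conjE)
      assume "sublist z x" then show ?thesis by simp
    next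
      assume "length x \<le> q" then show ?thesis using True by simp
    next
      assume a: "q < length x" "length x < q + length z" "drop q x = take (length x - q) z"
      define k where "k = length x - q"
      have "ov x y < k" "k \<le> length x" "k < length z" using a True k_def by auto
      moreover have "drop (length x - k) x = take k z" using a k_def by simp
      ultimately show ?thesis by blast
    qed
  qed
qed

definition Inv :: "dna set \<Rightarrow> dna set \<Rightarrow> bool" where
 "Inv V0 S \<longleftrightarrow> finite S \<and> sf (verts S) \<and> (\<forall>X\<in>verts S. \<exists>v\<in>V0. prefix v X) \<and>
   (\<forall>X\<in>verts S. \<forall>Z\<in>verts S. Z \<noteq> X \<longrightarrow> Z \<noteq> rc X \<longrightarrow> (\<forall>v\<in>V0. prefix v X \<longrightarrow> \<not> sublist v Z)) \<and>
   (\<forall>X\<in>verts S. X \<noteq> [] \<longrightarrow> (\<forall>v\<in>V0. prefix v X \<longrightarrow> ov X X < length v))"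

definition Good :: "dna set \<Rightarrow> dna \<Rightarrow> bool" where
  "Good V0 t \<longleftrightarrow> (\<exists>v\<in>V0. prefix v t \<and> (t \<noteq> [] \<longrightarrow> ov t t < length v))"

lemma Inv_sf: "Inv V0 S \<Longrightarrow> sf (verts S)" by (simp add: Inv_def)
lemma Inv_F: "Inv V0 S \<Longrightarrow> X \<in> verts S \<Longrightarrow> \<exists>v\<in>V0. prefix v X" by (simp add: Inv_def)
lemma Inv_K: "Inv V0 S \<Longrightarrow> X \<in> verts S \<Longrightarrow> Z \<in> verts S \<Longrightarrow> Z \<noteq> X \<Longrightarrow> Z \<noteq> rc X \<Longrightarrow>
   v \<in> V0 \<Longrightarrow> prefix v X \<Longrightarrow> \<not> sublist v Z" by (simp add: Inv_def)
lemma Inv_J: "Inv V0 S \<Longrightarrow> X \<in> verts S \<Longrightarrow> X \<noteq> [] \<Longrightarrow> v \<in> V0 \<Longrightarrow> prefix v X \<Longrightarrow> ov X X < length v"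
  by (simp add: Inv_def)

lemma Inv_Good: "Inv V0 S \<Longrightarrow> X \<in> verts S \<Longrightarrow> Good V0 X"
  unfolding Good_def using Inv_F Inv_J by blast

lemma verts_diff_sub: "verts (S - A) \<subseteq> verts S" by (auto simp: verts_def)

lemma Inv_mono: "Inv V0 S \<Longrightarrow> Inv V0 (S - A)"
proof -
  assume I: "Inv V0 S"
  have sub: "verts (S - A) \<subseteq> verts S" by (rule verts_diff_sub)
  show ?thesis unfolding Inv_def
  proof (intro conjI)
    show "finite (S - A)" using I by (simp add: Inv_def)
    show "sf (verts (S - A))" using Inv_sf[OF I] sub by (auto simp: sf_def)
    show "\<forall>X\<in>verts (S - A). \<exists>v\<in>V0. prefix v X" using I sub by (auto simp: Inv_def)
    show "\<forall>X\<in>verts (S - A). \<forall>Z\<in>verts (S - A). Z \<noteq> X \<longrightarrow> Z \<noteq> rc X \<longrightarrow>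
       (\<forall>v\<in>V0. prefix v X \<longrightarrow> \<not> sublist v Z)"
      using Inv_K[OF I] sub by blast
    show "\<forall>X\<in>verts (S - A). X \<noteq> [] \<longrightarrow> (\<forall>v\<in>V0. prefix v X \<longrightarrow> ov X X < length v)"
      using Inv_J[OF I] sub by blast
  qed
qed

lemma Inv_init:
  assumes "finite S" "sf (verts S)"
  shows "Inv (verts S) S"
proof -
  have pv: "v \<in> verts S \<Longrightarrow> X \<in> verts S \<Longrightarrow> prefix v X \<Longrightarrow> v = X" for v X
    using assms(2) by (meson prefix_imp_sublist sfD)
  show ?thesis unfolding Inv_def
  proof (intro conjI ballI impI allI)
    fix X assume "X \<in> verts S" then show "\<exists>v\<in>verts S. prefix v X" by blast
  next
    fix X Z v assume a: "X \<in> verts S" "Z \<in> verts S" "Z \<noteq> X" "Z \<noteq> rc X" "v \<in> verts S" "prefix v X"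
    then have "v = X" using pv by blast
    then show "\<not> sublist v Z" using a assms(2) by (metis sfD)
  next
    fix X v assume a: "X \<in> verts S" "X \<noteq> []" "v \<in> verts S" "prefix v X"
    then have "v = X" using pv by blast
    then show "ov X X < length v" using a ov_lt1 by simp
  qed (use assms in auto)
qed

section \<open>Join step\<close>

locale joinctx =
  fixes V0 S X Y
  assumes sfV: "sf V0" and I: "Inv V0 S" and mp: "max_pair S X Y" and XY: "X \<noteq> Y"
begin

lemma cXY: "(X, Y) \<in> cand S" using mp by (simp add: max_pair_def)
lemma X_in: "X \<in> verts S" using cXY by (simp add: cand_iff)
lemma Y_in: "Y \<in> verts S" using cXY by (simp add: cand_iff)
lemma rcXY: "rc X \<noteq> Y" using cXY XY by (simp add: cand_iff)
lemma sfS: "sf (verts S)" using I by (rule Inv_sf)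

lemma Y_ne: "Y \<noteq> []"
proof
  assume "Y = []"
  then have "sublist Y X" by simp
  then show False using sfD[OF sfS Y_in X_in] XY by simp
qed

lemma X_ne: "X \<noteq> []"
proof
  assume "X = []"
  then have "sublist X Y" by simp
  then show False using sfD[OF sfS X_in Y_in] XY by simp
qed

lemma nm: 
  assumes a: "a \<in> verts S" "a \<noteq> X" "a \<noteq> rc X" "a \<noteq> Y"
  shows "\<not> sublist a (merge X Y)"
proof
  assume s: "sublist a (merge X Y)"
  from span[OF s] show False
  proof (elim disjE exE conjE)
    assume "sublist a X" then show False using sfD[OF sfS a(1) X_in] a by simp
  next
    assume "sublist a Y" then show False using sfD[OF sfS a(1) Y_in] a by simp
  next
    fix k assume k: "ov X Y < k" "k \<le> length X" "k < length a" "drop (length X - k) X = take k a"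
    show False
    proof (cases "k = length X")
      case True
      then have "prefix X a" using k by (metis append_take_drop_id diff_self_eq_0 drop_0 prefixI)
      then have "sublist X a" by (rule prefix_imp_sublist)
      then show False using sfD[OF sfS X_in a(1)] a by simp
    next
      case False
      then have "ovp X a k" using k by (simp add: ovp_def)
      then have "k \<le> ov X a" by (rule ov_ge)
      moreover have "(X, a) \<in> cand S" using a X_in by (auto simp: cand_iff)
      then have "ov X a \<le> ov X Y" using mp by (rule max_pairD[rotated])
      ultimately show False using k by simp
    qed
  qed
qed

lemma pl:
  assumes a: "W \<in> verts S" "W \<noteq> X" "W \<noteq> rc X" "W \<noteq> Y" "W \<noteq> rc Y" and v: "v \<in> V0" "prefix v W"
  shows "\<not> sublist v (merge X Y)"
proof
  assume s: "sublist v (merge X Y)"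
  from span[OF s] show False
  proof (elim disjE exE conjE)
    assume "sublist v X" then show False using Inv_K[OF I a(1) X_in _ _ v] a by (metis rc_rc)
  next
    assume "sublist v Y" then show False using Inv_K[OF I a(1) Y_in _ _ v] a by (metis rc_rc)
  next
    fix k assume k: "ov X Y < k" "k \<le> length X" "k < length v" "drop (length X - k) X = take k v"
    have tk: "take k W = take k v" using v(2) k(3) by (metis prefix_def take_append less_imp_le_nat
          append_eq_conv_conj take_take min.absorb1)
    have lv: "length v \<le> length W" using v(2) by (rule prefix_length_le)
    show False
    proof (cases "k = length X")
      case True
      then have "prefix X W" using k tk by (metis append_take_drop_id diff_self_eq_0 drop_0 prefixI)
      then have "sublist X W" by (rule prefix_imp_sublist)
      then show False using sfD[OF sfS X_in a(1)] a by simp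
    next
      case False
      then have "ovp X W k" using k tk lv by (simp add: ovp_def)
      then have "k \<le> ov X W" by (rule ov_ge)
      moreover have "(X, W) \<in> cand S" using a X_in by (auto simp: cand_iff)
      then have "ov X W \<le> ov X Y" using mp by (rule max_pairD[rotated])
      ultimately show False using k by simp
    qed
  qed
qed

lemma px:
  assumes v: "v \<in> V0" "prefix v (merge X Y)"
  shows "prefix v X"
proof -
  obtain w where w: "w \<in> V0" "prefix w X" using Inv_F[OF I X_in] by blast
  have "prefix X (merge X Y)" by (rule prefix_merge)
  then have "prefix v X \<or> prefix X v" using v(2) prefix_same_cases by blast
  then show ?thesis
  proof
    assume "prefix X v"
    then have "prefix w v" using w(2) by (metis prefix_order.trans)
    then have "w = v" using sfD[OF sfV w(1) v(1)] prefix_imp_sublist by blast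
    then show ?thesis using w by simp
  qed
qed


lemma rc_ctx: "joinctx V0 S (rc Y) (rc X)"
  using sfV I max_pair_rc[OF mp] XY by unfold_locales auto

lemma b1: "ov (merge X Y) (merge X Y) < length Y"
proof (rule ccontr)
  define m where "m = merge X Y"
  define L where "L = ov m m"
  define oo where "oo = ov X Y"
  assume "\<not> ov (merge X Y) (merge X Y) < length Y"
  then have LY: "length Y \<le> L" by (simp add: L_def m_def)
  then have "L \<noteq> 0" using Y_ne by (cases Y) auto
  then have p: "ovp m m L" using ov_cases L_def by metis
  have lm: "length m = length X + length Y - oo" by (simp add: m_def oo_def length_merge)
  have oY: "oo < length Y" using ov_lt2[OF Y_ne] oo_def by simp
  have oX: "oo \<le> length X" using ov_le1 oo_def by simp
  have Lm: "L < length m" using p by (simp add: ovp_def)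
  obtain P where mP: "m = P @ Y" using suffix_merge[of Y X] m_def by (auto simp: suffix_def)
  have mX: "m = X @ drop oo Y" by (simp add: m_def oo_def merge_eq)
  define q where "q = L - length Y"
  have e1: "drop (length m - L) m = take L m" using p by (simp add: ovp_def)
  have "Y = drop (length m - length Y) m" using mP by simp
  also have "\<dots> = drop (L - length Y) (drop (length m - L) m)" using LY Lm by simp
  also have "\<dots> = drop q (take L m)" using e1 q_def by simp
  finally have Yq: "Y = drop q (take L m)" .
  have "take (length Y) (drop q m) = Y"
  proof -
    have "drop q (take L m) = take (L - q) (drop q m)" by (simp add: drop_take)
    moreover have "L - q = length Y" using LY q_def by simp
    ultimately show ?thesis using Yq by simp
  qed
  then have oc: "occ Y (X @ drop oo Y) q" using Lm LY q_def mX by (simp add: occ_def)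
  have qlt: "q < length X - oo" using Lm lm q_def LY oY by simp
  from occ_append_cases[OF oc] show False
  proof (elim disjE conjE)
    assume "sublist Y X" then show False using sfD[OF sfS Y_in X_in] XY by simp
  next
    assume "length X \<le> q" then show False using qlt by simp
  next
    assume a: "q < length X" "length X < q + length Y" "drop q X = take (length X - q) Y"
    show False
    proof (cases "q = 0")
      case True
      then have "prefix X Y" using a by (metis append_take_drop_id diff_zero drop_0 prefixI)
      then show False using sfD[OF sfS X_in Y_in] XY prefix_imp_sublist by blast
    next
      case False
      define k where "k = length X - q"
      have "k < length X" "k < length Y" using a False k_def by linarith+
      then have "ovp X Y k" using a k_def by (simp add: ovp_def)
      then have "k \<le> oo" using ov_ge oo_def by simp
      then show False using qlt k_def by simp
    qed
  qed
qed

lemma prefix_take_len: "prefix v X \<Longrightarrow> length v \<le> L \<Longrightarrow> prefix v (take L X)"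
proof -
  assume a: "prefix v X" "length v \<le> L"
  then obtain w where "X = v @ w" by (auto simp: prefix_def)
  then have "take L X = v @ take (L - length v) w" using a(2) by simp
  then show ?thesis by simp
qed

lemma jm:
  assumes v: "v \<in> V0" "prefix v (merge X Y)"
  shows "ov (merge X Y) (merge X Y) < length v"
proof (rule ccontr)
  define m where "m = merge X Y"
  define L where "L = ov m m"
  assume "\<not> ov (merge X Y) (merge X Y) < length v"
  then have vL: "length v \<le> L" by (simp add: L_def m_def)
  have LY: "L < length Y" using b1 L_def m_def by simp
  have "L < length (rc X)" using joinctx.b1[OF rc_ctx] L_def m_def
    by (simp add: rc_merge[symmetric] ov_rc)
  then have LX: "L < length X" by simp
  have pvX: "prefix v X" using px[OF v] .
  have "sublist v Y"
  proof (cases "L = 0")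
    case True
    then show ?thesis using vL by simp
  next
    case False
    then have p: "ovp m m L" using ov_cases L_def by metis
    obtain P where mP: "m = P @ Y" using suffix_merge[of Y X] m_def by (auto simp: suffix_def)
    have mX: "prefix X m" using prefix_merge m_def by simp
    have "take L m = take L X" using mX LX
      by (metis prefix_def take_append append_eq_conv_conj less_imp_le_nat take_take min.absorb1)
    moreover have "drop (length m - L) m = drop (length Y - L) Y" using mP LY by simp
    moreover have "drop (length m - L) m = take L m" using p by (simp add: ovp_def)
    ultimately have "take L X = drop (length Y - L) Y" by simp
    moreover have "prefix v (take L X)" using prefix_take_len[OF pvX vL] .
    ultimately have "sublist v (drop (length Y - L) Y)" by (metis prefix_imp_sublist)
    then show ?thesis by (meson sublist_drop sublist_order.dual_order.trans)
  qed
  moreover have "\<not> sublist v Y" using Inv_K[OF I X_in Y_in _ _ v(1) pvX] XY rcXY by metis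
  ultimately show False by simp
qed

definition Sj where "Sj = (S - {X, rc X, Y, rc Y}) \<union> {merge X Y}"

lemma verts_Sj: "verts Sj = (verts S - {X, rc X, Y, rc Y}) \<union> {merge X Y, rc (merge X Y)}"
  unfolding Sj_def verts_def by (auto simp: image_iff)

lemma Inv_Sj: "Inv V0 Sj"
proof -
  define m where "m = merge X Y"
  define R where "R = verts S - {X, rc X, Y, rc Y}"
  have VS: "verts Sj = R \<union> {m, rc m}" unfolding verts_Sj R_def m_def by (rule refl)
  have rcm: "rc m = merge (rc Y) (rc X)" unfolding m_def by (rule rc_merge)
  have RS: "R \<subseteq> verts S" unfolding R_def by (rule Diff_subset)
  have nm1: "a \<in> R \<Longrightarrow> \<not> sublist a m" for a
  proof -
    assume "a \<in> R"
    then have h: "a \<in> verts S" "a \<noteq> X" "a \<noteq> rc X" "a \<noteq> Y" unfolding R_def by auto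
    show ?thesis unfolding m_def by (rule nm[OF h])
  qed
  have nm2: "a \<in> R \<Longrightarrow> \<not> sublist a (rc m)" for a
  proof -
    assume "a \<in> R"
    then have h: "a \<in> verts S" "a \<noteq> rc Y" "a \<noteq> rc (rc Y)" "a \<noteq> rc X" unfolding R_def by auto
    show ?thesis unfolding rcm by (rule joinctx.nm[OF rc_ctx h])
  qed
  have Xm: "sublist X m" unfolding m_def by (rule prefix_imp_sublist[OF prefix_merge])
  have Ym: "sublist (rc Y) (rc m)" unfolding rcm by (rule prefix_imp_sublist[OF prefix_merge])
  have sfS': "sf (verts Sj)"
    unfolding sf_def VS
  proof (intro ballI impI)
    fix a b assume a: "a \<in> R \<union> {m, rc m}" and b: "b \<in> R \<union> {m, rc m}" and ab: "a \<noteq> b"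
    show "\<not> sublist a b"
    proof
      assume s: "sublist a b"
      consider "a \<in> R" | "a = m" | "a = rc m" using a by blast
      then show False
      proof cases
        case 1
        then show False using b s nm1 nm2 sfD[OF sfS] RS ab by blast
      next
        case 2
        show False
        proof (cases "b \<in> R")
          case True
          then have "sublist X b" using Xm s 2 sublist_order.order_trans by blast
          then show False using sfD[OF sfS X_in] True RS R_def by auto
        next
          case False
          then have "b = rc m" using b ab 2 by auto
          then show False using s 2 ab sublist_same_len by (metis length_rc order_refl)
        qed
      next
        case 3
        show False
        proof (cases "b \<in> R")
          case True
          then have "sublist (rc Y) b" using Ym s 3 sublist_order.order_trans by blast
          then show False using sfD[OF sfS verts_rc[OF Y_in]] True RS R_def by auto
        next
          case False
          then have "b = m" using b ab 3 by auto
          then show False using s 3 ab sublist_same_len by (metis length_rc order_refl)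
        qed
      qed
    qed
  qed
  have F': "\<forall>X0\<in>verts Sj. \<exists>v\<in>V0. prefix v X0"
  proof
    fix X0 assume "X0 \<in> verts Sj"
    then consider "X0 \<in> R" | "X0 = m" | "X0 = rc m" using VS by blast
    then show "\<exists>v\<in>V0. prefix v X0"
    proof cases
      case 1 then show ?thesis using Inv_F[OF I] RS by blast
    next
      case 2
      obtain v where "v \<in> V0" "prefix v X" using Inv_F[OF I X_in] by blast
      then show ?thesis using 2 prefix_merge m_def prefix_order.trans by metis
    next
      case 3
      obtain v where "v \<in> V0" "prefix v (rc Y)" using Inv_F[OF I verts_rc[OF Y_in]] by blast
      then show ?thesis using 3 prefix_merge rcm prefix_order.trans by metis
    qed
  qed
  have K': "\<forall>X0\<in>verts Sj. \<forall>Z\<in>verts Sj. Z \<noteq> X0 \<longrightarrow> Z \<noteq> rc X0 \<longrightarrow>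
              (\<forall>v\<in>V0. prefix v X0 \<longrightarrow> \<not> sublist v Z)"
  proof (intro ballI impI)
    fix X0 Z v assume X0: "X0 \<in> verts Sj" and Z: "Z \<in> verts Sj" and ZX: "Z \<noteq> X0" "Z \<noteq> rc X0"
      and v: "v \<in> V0" "prefix v X0"
    consider "X0 \<in> R" | "X0 = m" | "X0 = rc m" using X0 VS by blast
    then show "\<not> sublist v Z"
    proof cases
      case 1
      note X0R = 1
      then have h: "X0 \<in> verts S" "X0 \<noteq> X" "X0 \<noteq> rc X" "X0 \<noteq> Y" "X0 \<noteq> rc Y"
        unfolding R_def by auto
      have h2: "X0 \<noteq> rc Y" "X0 \<noteq> rc (rc Y)" "X0 \<noteq> rc X" "X0 \<noteq> rc (rc X)" using h by auto
      consider "Z \<in> R" | "Z = m" | "Z = rc m" using Z VS by blast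
      then show ?thesis
      proof cases
        case 1
        then show ?thesis using Inv_K[OF I h(1) _ ZX v] RS by blast
      next
        case 2
        then show ?thesis unfolding m_def using pl[OF h v] by simp
      next
        case 3
        then show ?thesis unfolding rcm using joinctx.pl[OF rc_ctx h(1) h2 v] by simp
      qed
    next
      case 2
      then have pv: "prefix v X" using px v m_def by simp
      then show ?thesis
      proof (cases "Z \<in> R")
        case True
        then show ?thesis using Inv_K[OF I X_in _ _ _ v(1) pv] RS R_def by auto
      next
        case False
        then show ?thesis using Z VS ZX 2 by auto
      qed
    next
      case 3
      then have pv: "prefix v (rc Y)" using joinctx.px[OF rc_ctx] v rcm by simp
      then show ?thesis
      proof (cases "Z \<in> R")
        case True
        then show ?thesis using Inv_K[OF I verts_rc[OF Y_in] _ _ _ v(1) pv] RS R_def by auto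
      next
        case False
        then show ?thesis using Z VS ZX 3 by auto
      qed
    qed
  qed
  have J': "\<forall>X0\<in>verts Sj. X0 \<noteq> [] \<longrightarrow> (\<forall>v\<in>V0. prefix v X0 \<longrightarrow> ov X0 X0 < length v)"
  proof (intro ballI impI)
    fix X0 v assume X0: "X0 \<in> verts Sj" "X0 \<noteq> []" and v: "v \<in> V0" "prefix v X0"
    consider "X0 \<in> R" | "X0 = m" | "X0 = rc m" using X0 VS by blast
    then show "ov X0 X0 < length v"
    proof cases
      case 1 then show ?thesis using Inv_J[OF I _ X0(2) v] RS by blast
    next
      case 2 then show ?thesis using jm v m_def by simp
    next
      case 3 then show ?thesis using joinctx.jm[OF rc_ctx] v rcm by simp
    qed
  qed
  have "finite S" using I unfolding Inv_def by blast
  then have "finite Sj" unfolding Sj_def by simp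
  then show ?thesis unfolding Inv_def using sfS' F' K' J' by (intro conjI)
qed

end

fun po :: "dna list \<Rightarrow> nat" where
  "po (x # y # r) = ov x y + po (y # r)"
| "po _ = 0"

lemma po_sum: "po l = (\<Sum>i<length l - 1. ov (l ! i) (l ! Suc i))"
proof (induction l rule: po.induct)
  case (1 x y r)
  have "(\<Sum>i<length (x # y # r) - 1. ov ((x # y # r) ! i) ((x # y # r) ! Suc i))
      = (\<Sum>i<Suc (length r). ov ((x # y # r) ! i) ((x # y # r) ! Suc i))" by simp
  also have "\<dots> = ov x y + (\<Sum>i<length r. ov ((y # r) ! i) ((y # r) ! Suc i))"
    by (subst sum.lessThan_Suc_shift) simp
  finally show ?case using 1 by simp
qed auto

lemma po_Cons: "zs \<noteq> [] \<Longrightarrow> po (x # zs) = ov x (hd zs) + po zs"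
  by (cases zs) auto

lemma po_append: "xs \<noteq> [] \<Longrightarrow> ys \<noteq> [] \<Longrightarrow> po (xs @ ys) = po xs + ov (last xs) (hd ys) + po ys"
proof (induction xs)
  case (Cons a xs)
  show ?case
  proof (cases "xs = []")
    case True then show ?thesis using Cons.prems po_Cons[of ys a] by simp
  next
    case False
    have "po ((a # xs) @ ys) = ov a (hd xs) + po (xs @ ys)" using False po_Cons[of "xs @ ys" a] by simp
    also have "\<dots> = ov a (hd xs) + po xs + ov (last xs) (hd ys) + po ys" using Cons False by simp
    also have "po (a # xs) = ov a (hd xs) + po xs" using False by (rule po_Cons)
    ultimately show ?thesis using False by simp
  qed
qed simp

lemma po_snoc: "xs \<noteq> [] \<Longrightarrow> po (xs @ [w]) = po xs + ov (last xs) w"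
  using po_append[of xs "[w]"] by simp

lemma po_flip: "po (map rc (rev l)) = po l"
proof (induction l rule: po.induct)
  case (1 x y r)
  have "map rc (rev (x # y # r)) = map rc (rev (y # r)) @ [rc x]" by simp
  then have "po (map rc (rev (x # y # r))) = po (map rc (rev (y # r))) + ov (rc y) (rc x)"
    using po_snoc[of "map rc (rev r) @ [rc y]" "rc x"] by simp
  then show ?case using 1 by (simp add: ov_rc)
qed auto

definition cyc_ov :: "dna list \<Rightarrow> nat" where
  "cyc_ov c = (case c of [] \<Rightarrow> 0 | x # r \<Rightarrow> po (x # r @ [x]))"

lemma cyc_ov_Cons: "cyc_ov (x # r) = po (x # r @ [x])" by (simp add: cyc_ov_def)

lemma cyc_ov_mod: "cyc_ov c = (\<Sum>i<length c. ov (c ! i) (c ! ((i + 1) mod length c)))"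
proof (cases c)
  case Nil then show ?thesis by (simp add: cyc_ov_def)
next
  case (Cons x r)
  have "cyc_ov c = po (c @ [x])" using Cons by (simp add: cyc_ov_def)
  also have "\<dots> = (\<Sum>i<length c. ov ((c @ [x]) ! i) ((c @ [x]) ! Suc i))" by (simp add: po_sum)
  also have "\<dots> = (\<Sum>i<length c. ov (c ! i) (c ! ((i + 1) mod length c)))"
  proof (rule sum.cong)
    fix i assume "i \<in> {..<length c}"
    then have i: "i < length c" by simp
    show "ov ((c @ [x]) ! i) ((c @ [x]) ! Suc i) = ov (c ! i) (c ! ((i + 1) mod length c))"
    proof (cases "Suc i < length c")
      case True then show ?thesis using i by (simp add: nth_append)
    next
      case False
      then have si: "Suc i = length c" using i by simp
      have e1: "(c @ [x]) ! i = c ! i" using i by (simp add: nth_append)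
      have e2: "(c @ [x]) ! Suc i = x" using si by (simp add: nth_append)
      have e3: "(i + 1) mod length c = 0" using si by simp
      have e4: "c ! 0 = x" using Cons by simp
      show ?thesis using e1 e2 e3 e4 by simp
    qed
  qed simp
  finally show ?thesis .
qed

lemma cw_id: "cycle_weight c + cyc_ov c = sum_list (map length c)"
proof -
  have "cycle_weight c + cyc_ov c =
     (\<Sum>i<length c. dist (c ! i) (c ! ((i + 1) mod length c)) + ov (c ! i) (c ! ((i + 1) mod length c)))"
    unfolding cycle_weight_def cyc_ov_mod by (simp add: sum.distrib)
  also have "\<dots> = (\<Sum>i<length c. length (c ! i))" by (simp add: dist_ov)
  also have "\<dots> = sum_list (map length c)"
    by (simp add: sum_list_sum_nth atLeast0LessThan)
  finally show ?thesis .
qed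

lemma cyc_ov_rot1: "cyc_ov (r @ [x]) = cyc_ov (x # r)"
proof (cases r)
  case Nil then show ?thesis by simp
next
  case (Cons y r')
  have "cyc_ov (r @ [x]) = po ((y # r' @ [x]) @ [y])" using Cons by (simp add: cyc_ov_def)
  also have "\<dots> = po (y # r' @ [x]) + ov x y" by (subst po_snoc) auto
  also have "cyc_ov (x # r) = ov x y + po (y # r' @ [x])" using Cons by (simp add: cyc_ov_def)
  ultimately show ?thesis by simp
qed

lemma cyc_ov_rotate1: "cyc_ov (rotate1 c) = cyc_ov c"
  by (cases c) (simp_all add: cyc_ov_rot1)

lemma cyc_ov_rotate: "cyc_ov (rotate n c) = cyc_ov c"
  by (induction n) (simp_all add: rotate_def cyc_ov_rotate1)

lemma cyc_ov_swap: "cyc_ov (a @ b) = cyc_ov (b @ a)"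
  by (metis cyc_ov_rotate rotate_append)

lemma cyc_ov_flip: "cyc_ov (map rc (rev c)) = cyc_ov c"
proof (cases c)
  case Nil then show ?thesis by simp
next
  case (Cons x r)
  have "cyc_ov (map rc (rev c)) = cyc_ov (map rc (rev r) @ [rc x])" using Cons by simp
  also have "\<dots> = cyc_ov (rc x # map rc (rev r))" by (rule cyc_ov_rot1)
  also have "\<dots> = po (rc x # map rc (rev r) @ [rc x])" by (rule cyc_ov_Cons)
  also have "rc x # map rc (rev r) @ [rc x] = map rc (rev (x # r @ [x]))" by simp
  also have "po \<dots> = po (x # r @ [x])" by (rule po_flip)
  finally show ?thesis using Cons by (simp add: cyc_ov_def)
qed

lemma cycle_weight_single: "cycle_weight [x] = dist x x"
  by (simp add: cycle_weight_def)

definition good :: "dna set \<Rightarrow> dna set \<Rightarrow> bool" where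
 "good S Ov \<longleftrightarrow> Ov \<subseteq> verts S \<and> (\<forall>s\<in>S. s \<in> Ov \<or> rc s \<in> Ov) \<and> (\<forall>x\<in>Ov. rc x \<in> Ov \<longrightarrow> rc x = x)"

lemma cover_iff_aux:
  assumes sub: "Ov \<subseteq> verts S"
  shows "(\<forall>s\<in>S. (s \<in> Ov \<or> rc s \<in> Ov) \<and> (s \<noteq> rc s \<longrightarrow> \<not> (s \<in> Ov \<and> rc s \<in> Ov))) \<longleftrightarrow>
        ((\<forall>s\<in>S. s \<in> Ov \<or> rc s \<in> Ov) \<and> (\<forall>x\<in>Ov. rc x \<in> Ov \<longrightarrow> rc x = x))"
proof
  assume a: "\<forall>s\<in>S. (s \<in> Ov \<or> rc s \<in> Ov) \<and> (s \<noteq> rc s \<longrightarrow> \<not> (s \<in> Ov \<and> rc s \<in> Ov))"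
  have "rc x = x" if x: "x \<in> Ov" "rc x \<in> Ov" for x
  proof -
    have "x \<in> verts S" using x sub by blast
    then consider "x \<in> S" | s where "s \<in> S" "x = rc s" by (auto simp: verts_def)
    then show ?thesis
    proof cases
      case 1
      then have "x \<noteq> rc x \<longrightarrow> \<not> (x \<in> Ov \<and> rc x \<in> Ov)" using a by blast
      then show ?thesis using x by auto
    next
      case 2
      then have "s \<noteq> rc s \<longrightarrow> \<not> (s \<in> Ov \<and> rc s \<in> Ov)" using a by blast
      moreover have "s \<in> Ov" "rc s \<in> Ov" using x 2 by auto
      ultimately have "s = rc s" by blast
      then show ?thesis using 2 by simp
    qed
  qed
  then show "(\<forall>s\<in>S. s \<in> Ov \<or> rc s \<in> Ov) \<and> (\<forall>x\<in>Ov. rc x \<in> Ov \<longrightarrow> rc x = x)" using a by blast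
next
  assume a: "(\<forall>s\<in>S. s \<in> Ov \<or> rc s \<in> Ov) \<and> (\<forall>x\<in>Ov. rc x \<in> Ov \<longrightarrow> rc x = x)"
  show "\<forall>s\<in>S. (s \<in> Ov \<or> rc s \<in> Ov) \<and> (s \<noteq> rc s \<longrightarrow> \<not> (s \<in> Ov \<and> rc s \<in> Ov))"
  proof (intro ballI conjI impI)
    fix s assume "s \<in> S"
    then show "s \<in> Ov \<or> rc s \<in> Ov" using a by blast
    assume "s \<noteq> rc s"
    then show "\<not> (s \<in> Ov \<and> rc s \<in> Ov)" using a by metis
  qed
qed

lemma cover_iff: "is_cycle_cover S C \<longleftrightarrow>
   (\<forall>c\<in>set C. c \<noteq> []) \<and> distinct (concat C) \<and> good S (set (concat C))"
proof (cases "set (concat C) \<subseteq> verts S")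
  case True
  show ?thesis unfolding is_cycle_cover_def good_def using cover_iff_aux[OF True] True by simp
next
  case False
  then show ?thesis unfolding is_cycle_cover_def good_def by simp
qed

definition tot :: "dna list list \<Rightarrow> nat" where "tot C = sum_list (map length (concat C))"
definition ovs :: "dna list list \<Rightarrow> nat" where "ovs C = sum_list (map cyc_ov C)"

lemma cover_weight_Cons[simp]: "cover_weight (c # C) = cycle_weight c + cover_weight C"
  by (simp add: cover_weight_def)
lemma cover_weight_Nil[simp]: "cover_weight [] = 0"
  by (simp add: cover_weight_def)
lemma cover_weight_append[simp]: "cover_weight (C @ D) = cover_weight C + cover_weight D"
  by (simp add: cover_weight_def)

lemma cw_tot: "cover_weight C + ovs C = tot C"
proof (induction C)
  case (Cons c C)
  then show ?case using cw_id[of c] by (simp add: ovs_def tot_def)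
qed (simp add: ovs_def tot_def)

lemma tot_mset: "mset (concat C') = mset (concat C) \<Longrightarrow> tot C' = tot C"
  unfolding tot_def by (metis mset_map sum_mset_sum_list)

lemma cover_mset:
  assumes "is_cycle_cover S C" "mset (concat C') = mset (concat C)" "\<forall>c\<in>set C'. c \<noteq> []"
  shows "is_cycle_cover S C'"
proof -
  have "set (concat C') = set (concat C)" using assms(2) by (metis mset_eq_setD)
  moreover have "distinct (concat C') = distinct (concat C)" using assms(2) mset_eq_imp_distinct_iff by blast
  ultimately show ?thesis using assms by (simp add: cover_iff)
qed

lemma good_flip:
  assumes g: "good S Ov" and Q: "Q \<subseteq> Ov"
  shows "good S ((Ov - Q) \<union> rc ` Q)"
  unfolding good_def
proof (intro conjI ballI impI)
  show "Ov - Q \<union> rc ` Q \<subseteq> verts S" using g Q verts_rc by (auto simp: good_def)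
next
  fix s assume s: "s \<in> S"
  then have "s \<in> Ov \<or> rc s \<in> Ov" using g by (simp add: good_def)
  then show "s \<in> Ov - Q \<union> rc ` Q \<or> rc s \<in> Ov - Q \<union> rc ` Q"
    by (metis DiffI UnI1 UnI2 image_eqI rc_rc)
next
  fix x assume x: "x \<in> Ov - Q \<union> rc ` Q" and rx: "rc x \<in> Ov - Q \<union> rc ` Q"
  have anti: "\<And>y. y \<in> Ov \<Longrightarrow> rc y \<in> Ov \<Longrightarrow> rc y = y" using g by (simp add: good_def)
  show "rc x = x"
  proof (cases "x \<in> Ov - Q")
    case True
    show ?thesis
    proof (cases "rc x \<in> Ov - Q")
      case True then show ?thesis using \<open>x \<in> Ov - Q\<close> anti by blast
    next
      case False
      then obtain q where q: "q \<in> Q" "rc x = rc q" using rx by auto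
      then have "x = q" by simp
      then show ?thesis using True q by blast
    qed
  next
    case False
    then obtain q where q: "q \<in> Q" "x = rc q" using x by auto
    then have "rc x = q" by simp
    then have "rc x \<in> Ov" using q Q by blast
    show ?thesis
    proof (cases "rc x \<in> Ov - Q")
      case True then show ?thesis using q by auto
    next
      case False
      then obtain q' where q': "q' \<in> Q" "rc x = rc q'" using rx by auto
      then have "x = q'" by simp
      then have "x \<in> Ov" using q' Q by blast
      then show ?thesis using anti \<open>rc x \<in> Ov\<close> by blast
    qed
  qed
qed

lemma distinct_flip:
  assumes d: "distinct (P @ S1 @ Q)" and a: "\<forall>s\<in>set S1. rc s \<in> set (P @ S1 @ Q) \<longrightarrow> rc s = s"
  shows "distinct (P @ map rc (rev S1) @ Q)"
proof -
  have "inj_on rc (set S1)" by (simp add: inj_on_def)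
  then have d1: "distinct (map rc (rev S1))" using d by (simp add: distinct_map)
  have "rc s \<notin> set P \<and> rc s \<notin> set Q" if s: "s \<in> set S1" for s
  proof (rule ccontr)
    assume "\<not> (rc s \<notin> set P \<and> rc s \<notin> set Q)"
    then have "rc s \<in> set (P @ S1 @ Q)" by auto
    then have "rc s = s" using a s by blast
    then show False using d s \<open>\<not> (rc s \<notin> set P \<and> rc s \<notin> set Q)\<close> by auto
  qed
  then show ?thesis using d d1 by auto
qed

lemma cover_flip:
  assumes cv: "is_cycle_cover S ((P @ S1 @ Q) # Cs)" and ne: "P @ map rc (rev S1) @ Q \<noteq> []"
  shows "is_cycle_cover S ((P @ map rc (rev S1) @ Q) # Cs)"
proof -
  define Ov where "Ov = set (concat ((P @ S1 @ Q) # Cs))"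
  have d: "distinct (P @ S1 @ (Q @ concat Cs))" using cv by (simp add: cover_iff)
  have g: "good S Ov" using cv by (simp add: cover_iff Ov_def)
  have anti: "\<forall>s\<in>set S1. rc s \<in> set (P @ S1 @ (Q @ concat Cs)) \<longrightarrow> rc s = s"
    using g by (auto simp: good_def Ov_def)
  have d2: "distinct (P @ map rc (rev S1) @ (Q @ concat Cs))" by (rule distinct_flip[OF d anti])
  have "set (P @ Q @ concat Cs) = Ov - set S1" using d by (auto simp: Ov_def)
  then have "set (concat ((P @ map rc (rev S1) @ Q) # Cs)) = (Ov - set S1) \<union> rc ` set S1" by auto
  moreover have "good S ((Ov - set S1) \<union> rc ` set S1)" using good_flip[OF g] Ov_def by auto
  ultimately show ?thesis using cv d2 ne by (simp add: cover_iff)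
qed

lemma cycle_weight_eq: "cyc_ov c' = cyc_ov c \<Longrightarrow> sum_list (map length c') = sum_list (map length c)
   \<Longrightarrow> cycle_weight c' = cycle_weight c"
  using cw_id[of c] cw_id[of c'] by simp

lemma cycle_weight_flip: "cycle_weight (map rc (rev c)) = cycle_weight c"
proof (rule cycle_weight_eq)
  show "cyc_ov (map rc (rev c)) = cyc_ov c" by (rule cyc_ov_flip)
  show "sum_list (map length (map rc (rev c))) = sum_list (map length c)"
    by (simp add: comp_def rev_map[symmetric])
qed

lemma cycle_weight_swap: "cycle_weight (a @ b) = cycle_weight (b @ a)"
  by (rule cycle_weight_eq) (simp_all add: cyc_ov_swap)

lemma ovs_Cons[simp]: "ovs (c # C) = cyc_ov c + ovs C" by (simp add: ovs_def)
lemma ovs_append[simp]: "ovs (C @ D) = ovs C + ovs D" by (simp add: ovs_def)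
lemma tot_Cons[simp]: "tot (c # C) = sum_list (map length c) + tot C" by (simp add: tot_def)
lemma tot_append[simp]: "tot (C @ D) = tot C + tot D" by (simp add: tot_def)

lemma weight_cmp: "tot C' = tot C \<Longrightarrow> ovs C \<le> ovs C' \<Longrightarrow> cover_weight C' \<le> cover_weight C"
  using cw_tot[of C] cw_tot[of C'] by linarith

lemma ex_cover: "finite S \<Longrightarrow> \<exists>C. is_cycle_cover S C"
proof (induction S rule: finite_induct)
  case empty
  have "is_cycle_cover {} []" by (simp add: cover_iff good_def)
  then show ?case ..
next
  case (insert s S)
  then obtain C where C: "is_cycle_cover S C" by blast
  define Ov where "Ov = set (concat C)"
  have g: "good S Ov" and d: "distinct (concat C)" and ne: "\<forall>c\<in>set C. c \<noteq> []"
    using C by (simp_all add: cover_iff Ov_def)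
  have vsub: "verts S \<subseteq> verts (insert s S)" by (auto simp: verts_def)
  show ?case
  proof (cases "s \<in> Ov \<or> rc s \<in> Ov")
    case True
    have "good (insert s S) Ov" using g True vsub by (auto simp: good_def)
    then have "is_cycle_cover (insert s S) C" using d ne by (simp add: cover_iff Ov_def)
    then show ?thesis ..
  next
    case False
    have sv: "s \<in> verts (insert s S)" by (simp add: verts_def)
    have "good (insert s S) (insert s Ov)"
      unfolding good_def
    proof (intro conjI ballI impI)
      show "insert s Ov \<subseteq> verts (insert s S)" using g vsub sv by (auto simp: good_def)
      fix x assume "x \<in> insert s S"
      then show "x \<in> insert s Ov \<or> rc x \<in> insert s Ov" using g by (auto simp: good_def)
    next
      fix x assume x: "x \<in> insert s Ov" and rx: "rc x \<in> insert s Ov"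
      show "rc x = x"
      proof (cases "x = s")
        case True then show ?thesis using rx False by auto
      next
        case xs: False
        then have xO: "x \<in> Ov" using x by simp
        show ?thesis
        proof (cases "rc x = s")
          case True then have "rc s = x" by auto
          then show ?thesis using xO False by auto
        next
          case False then show ?thesis using rx xO g by (auto simp: good_def)
        qed
      qed
    qed
    moreover have "distinct (concat ([s] # C))" using d False by (simp add: Ov_def)
    ultimately have "is_cycle_cover (insert s S) ([s] # C)" using ne by (simp add: cover_iff Ov_def)
    then show ?thesis ..
  qed
qed

lemma wCYC_attained: "finite S \<Longrightarrow> \<exists>C. is_cycle_cover S C \<and> cover_weight C = wCYC S"
proof -
  assume "finite S"
  then obtain C where "is_cycle_cover S C" using ex_cover by blast
  then have "\<exists>w. \<exists>C. is_cycle_cover S C \<and> cover_weight C = w" by blast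
  then show ?thesis unfolding wCYC_def by (rule LeastI_ex)
qed

lemma wCYC_le: "is_cycle_cover S C \<Longrightarrow> wCYC S \<le> cover_weight C"
  unfolding wCYC_def by (rule Least_le) blast

lemma cover_to_front:
  assumes cv: "is_cycle_cover S C" and z: "z \<in> set (concat C)"
  shows "\<exists>c Cs. is_cycle_cover S (c # Cs) \<and> cover_weight (c # Cs) = cover_weight C \<and> z \<in> set c"
proof -
  obtain c where c: "c \<in> set C" "z \<in> set c" using z by auto
  then obtain C1 C2 where C: "C = C1 @ c # C2" by (meson split_list)
  have ne: "\<forall>c\<in>set C. c \<noteq> []" using cv by (simp add: cover_iff)
  have "is_cycle_cover S (c # C1 @ C2)"
    by (rule cover_mset[OF cv]) (use ne C in auto)
  moreover have "cover_weight (c # C1 @ C2) = cover_weight C" using C by simp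
  ultimately show ?thesis using c by blast
qed

lemma cover_rot:
  assumes cv: "is_cycle_cover S (c # Cs)" and x: "x \<in> set c"
  shows "\<exists>A. is_cycle_cover S ((x # A) # Cs) \<and> cover_weight ((x # A) # Cs) = cover_weight (c # Cs)"
proof -
  obtain c1 c2 where c: "c = c1 @ x # c2" using x by (meson split_list)
  have ne: "\<forall>c\<in>set Cs. c \<noteq> []" using cv by (simp add: cover_iff)
  have "is_cycle_cover S ((x # c2 @ c1) # Cs)"
    by (rule cover_mset[OF cv]) (use ne c in auto)
  moreover have "cycle_weight (x # c2 @ c1) = cycle_weight c"
    using cycle_weight_swap[of "x # c2" c1] c by simp
  ultimately show ?thesis by auto
qed

lemma cover_cycle_flip:
  assumes cv: "is_cycle_cover S (c # Cs)"
  shows "is_cycle_cover S (map rc (rev c) # Cs) \<and> cover_weight (map rc (rev c) # Cs) = cover_weight (c # Cs)"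
proof -
  have ne: "c \<noteq> []" using cv by (simp add: cover_iff)
  have "is_cycle_cover S (([] @ map rc (rev c) @ []) # Cs)"
    by (rule cover_flip) (use cv ne in simp_all)
  then show ?thesis by (simp add: cycle_weight_flip)
qed

lemma cover_good: "is_cycle_cover S C \<Longrightarrow> good S (set (concat C))" by (simp add: cover_iff)

lemma vert_cov: "good S Ov \<Longrightarrow> x \<in> verts S \<Longrightarrow> x \<in> Ov \<or> rc x \<in> Ov"
proof -
  assume g: "good S Ov" and x: "x \<in> verts S"
  then have cov: "\<forall>s\<in>S. s \<in> Ov \<or> rc s \<in> Ov" by (simp add: good_def)
  show ?thesis
  proof (cases "x \<in> S")
    case True then show ?thesis using cov by blast
  next
    case False
    then obtain s where s: "s \<in> S" "x = rc s" using x by (auto simp: verts_def)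
    then show ?thesis using cov by auto
  qed
qed

lemma cover_front:
  assumes cv: "is_cycle_cover S C" and x: "x \<in> verts S"
  shows "\<exists>A Cs. is_cycle_cover S ((x # A) # Cs) \<and> cover_weight ((x # A) # Cs) = cover_weight C"
proof -
  have "x \<in> set (concat C) \<or> rc x \<in> set (concat C)" using vert_cov[OF cover_good[OF cv] x] .
  then show ?thesis
  proof
    assume "x \<in> set (concat C)"
    then obtain c Cs where a: "is_cycle_cover S (c # Cs)" "cover_weight (c # Cs) = cover_weight C" "x \<in> set c"
      using cover_to_front[OF cv] by blast
    then show ?thesis using cover_rot[OF a(1) a(3)] by metis
  next
    assume "rc x \<in> set (concat C)"
    then obtain c Cs where a: "is_cycle_cover S (c # Cs)" "cover_weight (c # Cs) = cover_weight C" "rc x \<in> set c"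
      using cover_to_front[OF cv] by blast
    have b: "is_cycle_cover S (map rc (rev c) # Cs)" "cover_weight (map rc (rev c) # Cs) = cover_weight C"
      using cover_cycle_flip[OF a(1)] a(2) by auto
    have "x \<in> set (map rc (rev c))" using a(3) by (metis image_eqI rc_rc set_map set_rev)
    then show ?thesis using cover_rot[OF b(1)] b(2) by metis
  qed
qed

lemma cand_cover: "good S Ov \<Longrightarrow> u \<in> Ov \<Longrightarrow> w \<in> Ov \<Longrightarrow> (u, w) \<in> cand S"
  unfolding good_def cand_iff by auto

lemma cyc_ov_Cons2: "A \<noteq> [] \<Longrightarrow> cyc_ov (x # A) = ov x (hd A) + po A + ov (last A) x"
proof -
  assume A: "A \<noteq> []"
  have "cyc_ov (x # A) = po (x # A @ [x])" by (rule cyc_ov_Cons)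
  also have "\<dots> = ov x (hd A) + po (A @ [x])" using A by (simp add: po_Cons)
  also have "po (A @ [x]) = po A + ov (last A) x" using A by (rule po_snoc)
  finally show ?thesis by simp
qed

lemma cyc_ov_self: "A \<noteq> [] \<Longrightarrow> cyc_ov A = po A + ov (last A) (hd A)"
proof -
  assume A: "A \<noteq> []"
  then obtain a A' where A': "A = a # A'" by (cases A) auto
  have "cyc_ov A = po (A @ [a])" using A' by (simp add: cyc_ov_def)
  also have "\<dots> = po A + ov (last A) (hd A)" using po_snoc[OF A, of a] A' by simp
  finally show ?thesis .
qed

lemma cyc_ov_single: "cyc_ov [x] = ov x x" by (simp add: cyc_ov_def)

lemma cover_remove_single:
  assumes cv: "is_cycle_cover S ([X] # Cs)"
  shows "is_cycle_cover (S - {X, rc X}) Cs"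
proof -
  define Ov where "Ov = set (concat Cs)"
  have g: "good S (insert X Ov)" and d: "distinct (X # concat Cs)" and ne: "\<forall>c\<in>set Cs. c \<noteq> []"
    using cv by (simp_all add: cover_iff Ov_def)
  have XO: "X \<notin> Ov" using d Ov_def by simp
  have rXO: "rc X \<notin> Ov"
  proof
    assume "rc X \<in> Ov"
    then have "rc X = X" using g by (auto simp: good_def)
    then show False using XO \<open>rc X \<in> Ov\<close> by simp
  qed
  have "good (S - {X, rc X}) Ov"
    unfolding good_def
  proof (intro conjI ballI impI)
    show "Ov \<subseteq> verts (S - {X, rc X})"
    proof
      fix x assume x: "x \<in> Ov"
      then have "x \<in> verts S" "x \<noteq> X" "x \<noteq> rc X" using g XO rXO by (auto simp: good_def)
      show "x \<in> verts (S - {X, rc X})"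
      proof (cases "x \<in> S")
        case True then show ?thesis using \<open>x \<noteq> X\<close> \<open>x \<noteq> rc X\<close> by (simp add: verts_def)
      next
        case False
        then obtain s where s: "s \<in> S" "x = rc s" using \<open>x \<in> verts S\<close> by (auto simp: verts_def)
        then have "s \<noteq> X" "s \<noteq> rc X" using \<open>x \<noteq> X\<close> \<open>x \<noteq> rc X\<close> by auto
        then show ?thesis using s by (auto simp: verts_def)
      qed
    qed
  next
    fix s assume s: "s \<in> S - {X, rc X}"
    then have "s \<in> insert X Ov \<or> rc s \<in> insert X Ov" using g by (auto simp: good_def)
    moreover have "s \<noteq> X" "rc s \<noteq> X" using s by auto
    ultimately show "s \<in> Ov \<or> rc s \<in> Ov" by auto
  next
    fix x assume "x \<in> Ov" "rc x \<in> Ov"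
    then show "rc x = x" using g by (auto simp: good_def)
  qed
  then show ?thesis using d ne by (simp add: cover_iff Ov_def)
qed

lemma W2:
  assumes fin: "finite S" and mp: "max_pair S X X"
  shows "wCYC (S - {X, rc X}) + dist X X \<le> wCYC S"
proof -
  have Xv: "X \<in> verts S" using mp by (simp add: max_pair_def cand_iff)
  obtain C where C: "is_cycle_cover S C" "cover_weight C = wCYC S" using wCYC_attained[OF fin] by blast
  obtain A Cs where AC: "is_cycle_cover S ((X # A) # Cs)" "cover_weight ((X # A) # Cs) = wCYC S"
    using cover_front[OF C(1) Xv] C(2) by metis
  have "\<exists>Cs'. is_cycle_cover S ([X] # Cs') \<and> cover_weight ([X] # Cs') \<le> wCYC S"
  proof (cases "A = []")
    case True then show ?thesis using AC by auto
  next
    case False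
    have cv: "is_cycle_cover S ([X] # A # Cs)"
      by (rule cover_mset[OF AC(1)]) (use AC(1) False in \<open>auto simp: cover_iff\<close>)
    have g: "good S (set (concat ((X # A) # Cs)))" using AC(1) by (rule cover_good)
    have c1: "(X, hd A) \<in> cand S" by (rule cand_cover[OF g]) (use False in auto)
    have c2: "(last A, X) \<in> cand S" by (rule cand_cover[OF g]) (use False in auto)
    have m: "ov X (hd A) + ov (last A) X \<le> ov X X + ov (last A) (hd A)"
      by (rule monge) (use max_pairD[OF mp c1] max_pairD[OF mp c2] in auto)
    have "ovs ((X # A) # Cs) \<le> ovs ([X] # A # Cs)"
      using m cyc_ov_Cons2[OF False, of X] cyc_ov_self[OF False] cyc_ov_single[of X] by simp
    moreover have "tot ([X] # A # Cs) = tot ((X # A) # Cs)" by simp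
    ultimately have "cover_weight ([X] # A # Cs) \<le> cover_weight ((X # A) # Cs)"
      by (rule weight_cmp[rotated])
    then show ?thesis using cv AC(2) by metis
  qed
  then obtain Cs' where Cs': "is_cycle_cover S ([X] # Cs')" "cover_weight ([X] # Cs') \<le> wCYC S" by blast
  have "wCYC (S - {X, rc X}) \<le> cover_weight Cs'"
    by (rule wCYC_le[OF cover_remove_single[OF Cs'(1)]])
  then show ?thesis using Cs'(2) cycle_weight_single[of X] by simp
qed

context joinctx
begin

lemma m_notin: "merge X Y \<notin> verts S"
proof
  assume a: "merge X Y \<in> verts S"
  have "sublist X (merge X Y)" by (rule prefix_imp_sublist[OF prefix_merge])
  then have "X = merge X Y" using sfD[OF sfS X_in a] by simp
  then have "length (merge X Y) = length X" by simp
  then show False using length_merge[of X Y] ov_lt2[OF Y_ne, of X] by simp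
qed

lemma rcm_notin: "rc (merge X Y) \<notin> verts S"
  using m_notin verts_rc by (metis rc_rc)

lemma contract:
  assumes cv: "is_cycle_cover S ((X # Y # B) # Cs)"
  shows "is_cycle_cover Sj ((merge X Y # B) # Cs) \<and>
         cover_weight ((merge X Y # B) # Cs) \<le> cover_weight ((X # Y # B) # Cs)"
proof
  define m where "m = merge X Y"
  define Rest where "Rest = set B \<union> set (concat Cs)"
  have d: "distinct (X # Y # B @ concat Cs)" and ne: "\<forall>c\<in>set Cs. c \<noteq> []"
    and g: "good S (insert X (insert Y Rest))" using cv by (simp_all add: cover_iff Rest_def)
  have XR: "X \<notin> Rest" and YR: "Y \<notin> Rest" using d by (auto simp: Rest_def)
  have sub: "insert X (insert Y Rest) \<subseteq> verts S" using g by (simp add: good_def)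
  have anti: "\<And>x. x \<in> insert X (insert Y Rest) \<Longrightarrow> rc x \<in> insert X (insert Y Rest) \<Longrightarrow> rc x = x"
    using g unfolding good_def by blast
  have rXR: "rc X \<notin> Rest"
  proof
    assume "rc X \<in> Rest" then have "rc X = X" using anti by blast
    then show False using XR \<open>rc X \<in> Rest\<close> by simp
  qed
  have rYR: "rc Y \<notin> Rest"
  proof
    assume "rc Y \<in> Rest" then have "rc Y = Y" using anti by blast
    then show False using YR \<open>rc Y \<in> Rest\<close> by simp
  qed
  have mR: "m \<notin> Rest" using m_notin sub m_def by blast
  have rmR: "rc m \<notin> Rest" using rcm_notin sub m_def by blast
  have vS: "verts Sj = (verts S - {X, rc X, Y, rc Y}) \<union> {m, rc m}" using verts_Sj m_def by simp
  have "good Sj (insert m Rest)"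
    unfolding good_def
  proof (intro conjI ballI impI)
    show "insert m Rest \<subseteq> verts Sj" using vS sub XR YR rXR rYR by auto
  next
    fix s assume s: "s \<in> Sj"
    show "s \<in> insert m Rest \<or> rc s \<in> insert m Rest"
    proof (cases "s = m")
      case False
      then have s2: "s \<in> S" "s \<notin> {X, rc X, Y, rc Y}" using s m_def by (auto simp: Sj_def)
      then have "s \<in> insert X (insert Y Rest) \<or> rc s \<in> insert X (insert Y Rest)"
        using g unfolding good_def by blast
      moreover have "rc s \<noteq> X" "rc s \<noteq> Y" using s2 by auto
      ultimately show ?thesis using s2 by auto
    qed simp
  next
    fix x assume x: "x \<in> insert m Rest" and rx: "rc x \<in> insert m Rest"
    show "rc x = x"
    proof (cases "x = m")
      case True then show ?thesis using rx rmR by auto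
    next
      case False
      then have xR: "x \<in> Rest" using x by simp
      have "rc x \<noteq> m"
      proof
        assume "rc x = m" then have "rc m = x" by auto
        then show False using rmR xR by simp
      qed
      then have "rc x \<in> Rest" using rx by simp
      then show ?thesis using anti xR by blast
    qed
  qed
  moreover have "distinct (m # B @ concat Cs)" using d mR by (simp add: Rest_def)
  ultimately show "is_cycle_cover Sj ((merge X Y # B) # Cs)"
    using ne by (simp add: cover_iff Rest_def m_def)
next
  define m where "m = merge X Y"
  have lm: "length m + ov X Y = length X + length Y" using length_merge[of X Y] ov_le2[of X Y] m_def by simp
  have t: "tot ((m # B) # Cs) + ov X Y = tot ((X # Y # B) # Cs)" using lm by simp
  have o: "cyc_ov (X # Y # B) \<le> cyc_ov (m # B) + ov X Y"
  proof (cases "B = []")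
    case True
    have "cyc_ov (X # Y # B) = ov X Y + ov Y X" using True by (simp add: cyc_ov_def)
    moreover have "cyc_ov (m # B) = ov m m" using True by (simp add: cyc_ov_def)
    ultimately show ?thesis using ov_merge_self[of Y X] m_def by simp
  next
    case False
    have "cyc_ov (X # Y # B) = ov X Y + po (Y # B) + ov (last B) X"
      using cyc_ov_Cons2[of "Y # B" X] False by simp
    moreover have "po (Y # B) = ov Y (hd B) + po B" using False by (rule po_Cons)
    moreover have "cyc_ov (m # B) = ov m (hd B) + po B + ov (last B) m" using cyc_ov_Cons2[OF False] .
    moreover have "ov Y (hd B) \<le> ov m (hd B)" unfolding m_def by (rule ov_suffix_mono[OF suffix_merge])
    moreover have "ov (last B) X \<le> ov (last B) m" unfolding m_def by (rule ov_prefix_mono[OF prefix_merge])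
    ultimately show ?thesis by simp
  qed
  have "cover_weight ((m # B) # Cs) + ovs ((m # B) # Cs) = tot ((m # B) # Cs)" by (rule cw_tot)
  moreover have "cover_weight ((X # Y # B) # Cs) + ovs ((X # Y # B) # Cs) = tot ((X # Y # B) # Cs)" by (rule cw_tot)
  ultimately show "cover_weight ((merge X Y # B) # Cs) \<le> cover_weight ((X # Y # B) # Cs)"
    using t o m_def by simp
qed

end

context joinctx
begin

lemma candXY: "(a, b) \<in> cand S \<Longrightarrow> ov a b \<le> ov X Y"
  using mp by (rule max_pairD)

lemma case1:
  assumes cv: "is_cycle_cover S ((X # A1 @ Y # B) # Cs)"
  shows "\<exists>B' Cs'. is_cycle_cover S ((X # Y # B') # Cs') \<and>
      cover_weight ((X # Y # B') # Cs') \<le> cover_weight ((X # A1 @ Y # B) # Cs)"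
proof (cases "A1 = []")
  case True then show ?thesis using cv by auto
next
  case False
  have cv2: "is_cycle_cover S ((X # Y # B) # A1 # Cs)"
    by (rule cover_mset[OF cv]) (use cv False in \<open>auto simp: cover_iff\<close>)
  have g: "good S (set (concat ((X # A1 @ Y # B) # Cs)))" using cv by (rule cover_good)
  have c1: "(X, hd A1) \<in> cand S" by (rule cand_cover[OF g]) (use False in auto)
  have c2: "(last A1, Y) \<in> cand S" by (rule cand_cover[OF g]) (use False in auto)
  have m: "ov X (hd A1) + ov (last A1) Y \<le> ov X Y + ov (last A1) (hd A1)"
    by (rule monge) (use candXY[OF c1] candXY[OF c2] in auto)
  have ne: "A1 @ Y # B \<noteq> []" by simp
  have e1: "cyc_ov (X # A1 @ Y # B) = ov X (hd A1) + po (A1 @ Y # B) + ov (last (Y # B)) X"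
    using cyc_ov_Cons2[OF ne, of X] False by simp
  have e2: "po (A1 @ Y # B) = po A1 + ov (last A1) Y + po (Y # B)"
    using po_append[OF False, of "Y # B"] by simp
  have e3: "cyc_ov (X # Y # B) = ov X Y + po (Y # B) + ov (last (Y # B)) X"
    using cyc_ov_Cons2[of "Y # B" X] by simp
  have e4: "cyc_ov A1 = po A1 + ov (last A1) (hd A1)" by (rule cyc_ov_self[OF False])
  have "ovs ((X # A1 @ Y # B) # Cs) \<le> ovs ((X # Y # B) # A1 # Cs)"
    using e1 e2 e3 e4 m by simp
  moreover have "tot ((X # Y # B) # A1 # Cs) = tot ((X # A1 @ Y # B) # Cs)" by simp
  ultimately have "cover_weight ((X # Y # B) # A1 # Cs) \<le> cover_weight ((X # A1 @ Y # B) # Cs)"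
    by (rule weight_cmp[rotated])
  then show ?thesis using cv2 by blast
qed

lemma case2:
  assumes cv: "is_cycle_cover S ((X # A) # C1 @ (c1 @ Y # c2) # C2)"
  shows "\<exists>B' Cs'. is_cycle_cover S ((X # Y # B') # Cs') \<and>
      cover_weight ((X # Y # B') # Cs') \<le> cover_weight ((X # A) # C1 @ (c1 @ Y # c2) # C2)"
proof -
  define B where "B = c2 @ c1"
  have nec: "\<forall>c\<in>set ((X # A) # C1 @ (c1 @ Y # c2) # C2). c \<noteq> []" using cv by (simp add: cover_iff)
  have cv2: "is_cycle_cover S ((X # Y # B @ A) # C1 @ C2)"
  proof (rule cover_mset[OF cv])
    show "mset (concat ((X # Y # B @ A) # C1 @ C2)) = mset (concat ((X # A) # C1 @ (c1 @ Y # c2) # C2))"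
      by (simp add: B_def ac_simps)
    show "\<forall>c\<in>set ((X # Y # B @ A) # C1 @ C2). c \<noteq> []" using nec by simp
  qed
  have g: "good S (set (concat ((X # A) # C1 @ (c1 @ Y # c2) # C2)))" using cv by (rule cover_good)
  define h where "h = hd (A @ [X])"
  define x' where "x' = last (Y # B)"
  have hin: "h \<in> set (X # A)" unfolding h_def by (cases A) auto
  have "x' \<in> set (Y # B)" unfolding x'_def by (rule last_in_set) simp
  then have xin: "x' \<in> set (c1 @ Y # c2)" unfolding B_def by auto
  have c1: "(X, h) \<in> cand S" by (rule cand_cover[OF g]) (use hin in auto)
  have c2: "(x', Y) \<in> cand S" by (rule cand_cover[OF g]) (use xin in auto)
  have m: "ov X h + ov x' Y \<le> ov X Y + ov x' h"
    by (rule monge) (use candXY[OF c1] candXY[OF c2] in auto)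
  have ne: "A @ [X] \<noteq> []" by simp
  have e1: "cyc_ov (X # A) = ov X h + po (A @ [X])"
    using cyc_ov_Cons[of X A] po_Cons[OF ne, of X] h_def by simp
  have e2: "cyc_ov (c1 @ Y # c2) = po (Y # B) + ov x' Y"
  proof -
    have "cyc_ov (c1 @ Y # c2) = cyc_ov ((Y # c2) @ c1)" by (rule cyc_ov_swap)
    also have "\<dots> = po ((Y # B) @ [Y])" using B_def cyc_ov_Cons[of Y B] by simp
    also have "\<dots> = po (Y # B) + ov x' Y" using po_snoc[of "Y # B" Y] x'_def by simp
    finally show ?thesis .
  qed
  have e3: "cyc_ov (X # Y # B @ A) = ov X Y + po (Y # B) + ov x' h + po (A @ [X])"
  proof -
    have "cyc_ov (X # Y # B @ A) = po (X # ((Y # B) @ (A @ [X])))" using cyc_ov_Cons[of X "Y # B @ A"] by simp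
    also have "\<dots> = ov X Y + po ((Y # B) @ (A @ [X]))" using po_Cons[of "(Y # B) @ (A @ [X])" X] by simp
    also have "po ((Y # B) @ (A @ [X])) = po (Y # B) + ov x' h + po (A @ [X])"
      using po_append[of "Y # B" "A @ [X]"] x'_def h_def by simp
    finally show ?thesis by simp
  qed
  have "ovs ((X # A) # C1 @ (c1 @ Y # c2) # C2) \<le> ovs ((X # Y # B @ A) # C1 @ C2)"
    using e1 e2 e3 m by simp
  moreover have "tot ((X # Y # B @ A) # C1 @ C2) = tot ((X # A) # C1 @ (c1 @ Y # c2) # C2)"
    by (simp add: B_def)
  ultimately have "cover_weight ((X # Y # B @ A) # C1 @ C2) \<le> cover_weight ((X # A) # C1 @ (c1 @ Y # c2) # C2)"
    by (rule weight_cmp[rotated])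
  then show ?thesis using cv2 by blast
qed

lemma case3:
  assumes cv: "is_cycle_cover S ((X # A1 @ rc Y # B) # Cs)"
    and Yn: "Y \<notin> set (concat ((X # A1 @ rc Y # B) # Cs))"
  shows "\<exists>B' Cs'. is_cycle_cover S ((X # Y # B') # Cs') \<and>
      cover_weight ((X # Y # B') # Cs') \<le> cover_weight ((X # A1 @ rc Y # B) # Cs)"
proof -
  define B' where "B' = map rc (rev A1) @ B"
  have eqc: "X # A1 @ rc Y # B = [X] @ (A1 @ [rc Y]) @ B" by simp
  have eqn: "X # Y # B' = [X] @ map rc (rev (A1 @ [rc Y])) @ B" by (simp add: B'_def)
  have cv2: "is_cycle_cover S ((X # Y # B') # Cs)"
  proof -
    have cv': "is_cycle_cover S (([X] @ (A1 @ [rc Y]) @ B) # Cs)" using cv unfolding eqc .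
    have "[X] @ map rc (rev (A1 @ [rc Y])) @ B \<noteq> []" by simp
    then show ?thesis unfolding eqn by (rule cover_flip[OF cv'])
  qed
  have g: "good S (set (concat ((X # A1 @ rc Y # B) # Cs)))" using cv by (rule cover_good)
  define h1 where "h1 = hd (A1 @ [rc Y])"
  define h2 where "h2 = hd (B @ [X])"
  have h1in: "h1 \<in> set (A1 @ [rc Y])" unfolding h1_def by (cases A1) auto
  have h2in: "h2 \<in> set (B @ [X])" unfolding h2_def by (cases B) auto
  have c1: "(X, h1) \<in> cand S" by (rule cand_cover[OF g]) (use h1in in auto)
  have h2v: "h2 \<in> verts S" using g h2in by (auto simp: good_def)
  have h2Y: "h2 \<noteq> Y" using Yn h2in by auto
  have rh2: "rc h2 \<in> verts S" by (rule verts_rc[OF h2v])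
  have c2: "(rc h2, Y) \<in> cand S" using rh2 Y_in h2Y by (simp add: cand_iff)
  have m: "ov X h1 + ov (rc h2) Y \<le> ov X Y + ov (rc h2) h1"
    by (rule monge) (use candXY[OF c1] candXY[OF c2] in auto)
  have r1: "ov (rc Y) h2 = ov (rc h2) Y" using ov_rc[of Y "rc h2"] by simp
  have r2: "ov (rc h1) h2 = ov (rc h2) h1" using ov_rc[of h1 "rc h2"] by simp
  have e1: "cyc_ov (X # A1 @ rc Y # B) = ov X h1 + po (A1 @ [rc Y]) + ov (rc Y) h2 + po (B @ [X])"
  proof -
    have "cyc_ov (X # A1 @ rc Y # B) = po ((X # A1 @ [rc Y]) @ (B @ [X]))"
      using cyc_ov_Cons[of X "A1 @ rc Y # B"] by simp
    also have "\<dots> = po (X # A1 @ [rc Y]) + ov (rc Y) h2 + po (B @ [X])"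
      using po_append[of "X # A1 @ [rc Y]" "B @ [X]"] h2_def by simp
    also have "po (X # A1 @ [rc Y]) = ov X h1 + po (A1 @ [rc Y])"
      using po_Cons[of "A1 @ [rc Y]" X] h1_def by simp
    finally show ?thesis by simp
  qed
  have lst: "last (Y # map rc (rev A1)) = rc h1" unfolding h1_def
    by (cases A1) (auto simp: last_map)
  have e2: "cyc_ov (X # Y # B') = ov X Y + po (A1 @ [rc Y]) + ov (rc h1) h2 + po (B @ [X])"
  proof -
    have "cyc_ov (X # Y # B') = po (X # ((Y # map rc (rev A1)) @ (B @ [X])))"
      using cyc_ov_Cons[of X "Y # B'"] B'_def by simp
    also have "\<dots> = ov X Y + po ((Y # map rc (rev A1)) @ (B @ [X]))"
      using po_Cons[of "(Y # map rc (rev A1)) @ (B @ [X])" X] by simp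
    also have "po ((Y # map rc (rev A1)) @ (B @ [X])) = po (Y # map rc (rev A1)) + ov (rc h1) h2 + po (B @ [X])"
      using po_append[of "Y # map rc (rev A1)" "B @ [X]"] lst h2_def by simp
    also have "po (Y # map rc (rev A1)) = po (A1 @ [rc Y])"
      using po_flip[of "A1 @ [rc Y]"] by simp
    finally show ?thesis by simp
  qed
  have "ovs ((X # A1 @ rc Y # B) # Cs) \<le> ovs ((X # Y # B') # Cs)"
    using e1 e2 m r1 r2 by simp
  moreover have "tot ((X # Y # B') # Cs) = tot ((X # A1 @ rc Y # B) # Cs)"
    by (simp add: B'_def comp_def rev_map[symmetric])
  ultimately have "cover_weight ((X # Y # B') # Cs) \<le> cover_weight ((X # A1 @ rc Y # B) # Cs)"
    by (rule weight_cmp[rotated])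
  then show ?thesis using cv2 by blast
qed

end

context joinctx
begin

lemma step2:
  assumes cv: "is_cycle_cover S ((X # A) # Cs)"
  shows "\<exists>B Cs'. is_cycle_cover S ((X # Y # B) # Cs') \<and>
      cover_weight ((X # Y # B) # Cs') \<le> cover_weight ((X # A) # Cs)"
proof -
  have c2gen: "\<exists>B Cs'. is_cycle_cover S ((X # Y # B) # Cs') \<and>
      cover_weight ((X # Y # B) # Cs') \<le> cover_weight ((X # A') # Ds)"
    if cvd: "is_cycle_cover S ((X # A') # Ds)" and yd: "Y \<in> set (concat Ds)" for A' Ds
  proof -
    obtain c where c: "c \<in> set Ds" "Y \<in> set c" using yd by auto
    then obtain C1 C2 where D: "Ds = C1 @ c # C2" by (meson split_list)
    obtain c1 c2 where cc: "c = c1 @ Y # c2" using c(2) by (meson split_list)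
    have "is_cycle_cover S ((X # A') # C1 @ (c1 @ Y # c2) # C2)" using cvd D cc by simp
    from case2[OF this] show ?thesis using D cc by simp
  qed
  show ?thesis
  proof (cases "Y \<in> set A")
    case True
    then obtain A1 B where "A = A1 @ Y # B" by (meson split_list)
    then show ?thesis using case1 cv by simp
  next
    case YA: False
    show ?thesis
    proof (cases "Y \<in> set (concat Cs)")
      case True then show ?thesis using c2gen[OF cv] by blast
    next
      case False
      have Yn: "Y \<notin> set (concat ((X # A) # Cs))" using YA False XY by simp
      have "rc Y \<in> set (concat ((X # A) # Cs))"
        using vert_cov[OF cover_good[OF cv] Y_in] Yn by blast
      moreover have "rc Y \<noteq> X" using rcXY by auto
      ultimately have "rc Y \<in> set A \<or> rc Y \<in> set (concat Cs)" by simp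
      then show ?thesis
      proof
        assume "rc Y \<in> set A"
        then obtain A1 B where AB: "A = A1 @ rc Y # B" by (meson split_list)
        show ?thesis using case3[of A1 B Cs] cv Yn AB by simp
      next
        assume "rc Y \<in> set (concat Cs)"
        then obtain c where c: "c \<in> set Cs" "rc Y \<in> set c" by auto
        then obtain C1 C2 where D: "Cs = C1 @ c # C2" by (meson split_list)
        have ne: "\<forall>d\<in>set ((X # A) # Cs). d \<noteq> []" using cv by (simp add: cover_iff)
        have cva: "is_cycle_cover S (c # (X # A) # C1 @ C2)"
        proof (rule cover_mset[OF cv])
          show "mset (concat (c # (X # A) # C1 @ C2)) = mset (concat ((X # A) # Cs))"
            by (simp add: D ac_simps)
          show "\<forall>d\<in>set (c # (X # A) # C1 @ C2). d \<noteq> []" using ne D by simp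
        qed
        have fl: "is_cycle_cover S (map rc (rev c) # (X # A) # C1 @ C2)"
          "cover_weight (map rc (rev c) # (X # A) # C1 @ C2) = cover_weight (c # (X # A) # C1 @ C2)"
          using cover_cycle_flip[OF cva] by auto
        have ne2: "\<forall>d\<in>set (map rc (rev c) # (X # A) # C1 @ C2). d \<noteq> []"
          using fl(1) by (simp add: cover_iff)
        have cvb: "is_cycle_cover S ((X # A) # map rc (rev c) # C1 @ C2)"
        proof (rule cover_mset[OF fl(1)])
          show "mset (concat ((X # A) # map rc (rev c) # C1 @ C2)) =
                mset (concat (map rc (rev c) # (X # A) # C1 @ C2))"
            by (simp add: ac_simps)
          show "\<forall>d\<in>set ((X # A) # map rc (rev c) # C1 @ C2). d \<noteq> []" using ne2 by simp
        qed
        have wb: "cover_weight ((X # A) # map rc (rev c) # C1 @ C2) = cover_weight ((X # A) # Cs)"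
          using fl(2) D by simp
        have "Y \<in> set (map rc (rev c))" using c(2) by (metis image_eqI rc_rc set_map set_rev)
        then have "Y \<in> set (concat (map rc (rev c) # C1 @ C2))" by simp
        from c2gen[OF cvb this] show ?thesis using wb by simp
      qed
    qed
  qed
qed

lemma W1: "wCYC Sj \<le> wCYC S"
proof -
  have fin: "finite S" using I by (simp add: Inv_def)
  obtain C where C: "is_cycle_cover S C" "cover_weight C = wCYC S" using wCYC_attained[OF fin] by blast
  obtain A Cs where AC: "is_cycle_cover S ((X # A) # Cs)" "cover_weight ((X # A) # Cs) = wCYC S"
    using cover_front[OF C(1) X_in] C(2) by metis
  obtain B Cs' where BC: "is_cycle_cover S ((X # Y # B) # Cs')"
    "cover_weight ((X # Y # B) # Cs') \<le> wCYC S" using step2[OF AC(1)] AC(2) by fastforce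
  from contract[OF BC(1)] have "is_cycle_cover Sj ((merge X Y # B) # Cs')"
    "cover_weight ((merge X Y # B) # Cs') \<le> cover_weight ((X # Y # B) # Cs')" by auto
  then show ?thesis using wCYC_le BC(2) by (meson order_trans)
qed

end

lemma run_main:
  assumes "mgreedy_run S T R" "sf V0" "Inv V0 S" "finite T" "\<forall>t\<in>T. Good V0 t"
  shows "finite R \<and> (\<forall>t\<in>R. Good V0 t) \<and> (\<Sum>t\<in>R. dist t t) \<le> (\<Sum>t\<in>T. dist t t) + wCYC S"
  using assms
proof (induction S T R rule: mgreedy_run.induct)
  case (stop T)
  then show ?case by simp
next
  case (loop S x T R)
  have xv: "x \<in> verts S" using loop.hyps(2) by (simp add: max_pair_def cand_iff)
  have I': "Inv V0 (S - {x, rc x})" using Inv_mono[OF loop.prems(2)] .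
  have G: "\<forall>t\<in>insert x T. Good V0 t" using loop.prems(4) Inv_Good[OF loop.prems(2) xv] by simp
  have IH: "finite R \<and> (\<forall>t\<in>R. Good V0 t) \<and>
      (\<Sum>t\<in>R. dist t t) \<le> (\<Sum>t\<in>insert x T. dist t t) + wCYC (S - {x, rc x})"
    using loop.IH[OF loop.prems(1) I' _ G] loop.prems(3) by simp
  have s1: "(\<Sum>t\<in>insert x T. dist t t) \<le> (\<Sum>t\<in>T. dist t t) + dist x x"
    using loop.prems(3) by (simp add: sum.insert_if)
  have fin: "finite S" using loop.prems(2) by (simp add: Inv_def)
  have w: "wCYC (S - {x, rc x}) + dist x x \<le> wCYC S" by (rule W2[OF fin loop.hyps(2)])
  show ?case using IH s1 w by simp
next
  case (join S x y T R)
  interpret J: joinctx V0 S x y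
    using join.prems(1,2) join.hyps(2,3) by unfold_locales auto
  have eq: "J.Sj = (S - {x, rc x, y, rc y}) \<union> {merge x y}" by (rule J.Sj_def)
  have I': "Inv V0 ((S - {x, rc x, y, rc y}) \<union> {merge x y})" using J.Inv_Sj eq by simp
  have IH: "finite R \<and> (\<forall>t\<in>R. Good V0 t) \<and>
      (\<Sum>t\<in>R. dist t t) \<le> (\<Sum>t\<in>T. dist t t) + wCYC ((S - {x, rc x, y, rc y}) \<union> {merge x y})"
    using join.IH[OF join.prems(1) I' join.prems(3,4)] .
  have "wCYC ((S - {x, rc x, y, rc y}) \<union> {merge x y}) \<le> wCYC S" using J.W1 eq by simp
  then show ?case using IH by simp
qed

fun ins :: "dna \<Rightarrow> (nat \<times> dna \<times> dna) list \<Rightarrow> dna" where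
  "ins u [] = u"
| "ins u ((e, r, N) # L) = ins (take e u) L @ N @ drop e u"

definition valid :: "dna set \<Rightarrow> dna \<Rightarrow> (nat \<times> dna \<times> dna) list \<Rightarrow> bool" where
  "valid F u L \<longleftrightarrow> (\<forall>(e, r, N)\<in>set L. r \<in> F \<and> e \<le> length u \<and> suffix r (take e u) \<and> suffix r (r @ N))
     \<and> sorted_wrt (\<lambda>a b. fst b \<le> fst a) L"

lemma valid_Cons:
  assumes "valid F u ((e, r, N) # L)"
  shows "r \<in> F" "e \<le> length u" "suffix r (take e u)" "suffix r (r @ N)" "valid F (take e u) L"
proof -
  show "r \<in> F" "e \<le> length u" "suffix r (take e u)" "suffix r (r @ N)" using assms by (auto simp: valid_def)
  have s: "sorted_wrt (\<lambda>a b. fst b \<le> fst a) ((e, r, N) # L)" using assms by (simp add: valid_def)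
  have "\<forall>(e', r', N')\<in>set L. r' \<in> F \<and> e' \<le> length (take e u) \<and> suffix r' (take e' (take e u)) \<and> suffix r' (r' @ N')"
  proof (intro ballI, clarify)
    fix e' r' N' assume m: "(e', r', N') \<in> set L"
    then have a: "r' \<in> F" "e' \<le> length u" "suffix r' (take e' u)" "suffix r' (r' @ N')"
      using assms by (auto simp: valid_def)
    have "e' \<le> e" using s m by auto
    then show "r' \<in> F \<and> e' \<le> length (take e u) \<and> suffix r' (take e' (take e u)) \<and> suffix r' (r' @ N')"
      using a \<open>e \<le> length u\<close> by (simp add: min_def)
  qed
  then show "valid F (take e u) L" using s by (simp add: valid_def)
qed

lemma suffix_app_N: "suffix r X \<Longrightarrow> suffix r (r @ N) \<Longrightarrow> suffix r (X @ N)"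
  by (auto simp: suffix_def)

lemma suffix_iff_drop: "suffix z x \<longleftrightarrow> length z \<le> length x \<and> z = drop (length x - length z) x"
proof
  assume "suffix z x"
  then obtain w where "x = w @ z" by (auto simp: suffix_def)
  then show "length z \<le> length x \<and> z = drop (length x - length z) x" by simp
next
  assume a: "length z \<le> length x \<and> z = drop (length x - length z) x"
  have "x = take (length x - length z) x @ drop (length x - length z) x" by simp
  then show "suffix z x" using a unfolding suffix_def by metis
qed

lemma suffix_short: "suffix z (A @ B) \<Longrightarrow> length z \<le> length B \<Longrightarrow> suffix z B"
proof -
  assume a: "suffix z (A @ B)" "length z \<le> length B"
  then have "z = drop (length A + length B - length z) (A @ B)" by (simp add: suffix_iff_drop)
  also have "\<dots> = drop (length B - length z) B" using a(2) by simp
  finally show ?thesis using a(2) by (simp add: suffix_iff_drop)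
qed

lemma suffix_both: "suffix a X \<Longrightarrow> suffix b X \<Longrightarrow> length a \<le> length b \<Longrightarrow> suffix a b"
proof -
  assume a: "suffix a X" "suffix b X" "length a \<le> length b"
  then have ea: "a = drop (length X - length a) X" and eb: "b = drop (length X - length b) X"
    and lb: "length b \<le> length X" by (simp_all add: suffix_iff_drop)
  have idx: "length b - length a + (length X - length b) = length X - length a" using lb a(3) by simp
  have "drop (length b - length a) b = drop (length b - length a + (length X - length b)) X"
    by (subst eb) (simp only: drop_drop)
  also have "\<dots> = drop (length X - length a) X" by (simp only: idx)
  finally have "drop (length b - length a) b = drop (length X - length a) X" .
  then show ?thesis using ea a(3) by (simp add: suffix_iff_drop)
qed

lemma ins_suffix:
  assumes "sf F" "valid F u L" "z \<in> F" "suffix z u"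
  shows "suffix z (ins u L)"
  using assms(2,3,4)
proof (induction L arbitrary: u z)
  case Nil then show ?case by simp
next
  case (Cons a L)
  obtain e r N where a: "a = (e, r, N)" by (metis prod_cases3)
  note v = valid_Cons[OF Cons.prems(1)[unfolded a]]
  define A where "A = take e u"
  define B where "B = drop e u"
  have u: "u = A @ B" by (simp add: A_def B_def)
  have res: "ins u (a # L) = ins A L @ N @ B" by (simp add: a A_def B_def)
  show ?case
  proof (cases "length z \<le> length B")
    case True
    then have "suffix z B" using Cons.prems(3) u suffix_short by metis
    then show ?thesis unfolding res by (auto simp: suffix_def)
  next
    case False
    define k where "k = length z - length B"
    define P where "P = drop (length A - k) A"
    have zPB: "z = P @ B"
    proof -
      have lz: "length z \<le> length u" and ez: "z = drop (length u - length z) u"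
        using Cons.prems(3) by (simp_all add: suffix_iff_drop)
      have lu: "length u = length A + length B" using u by simp
      have "length u - length z = length A - k" using lz lu False k_def by simp
      moreover have "length A - k \<le> length A" by simp
      ultimately have "drop (length u - length z) u = drop (length A - k) A @ B" using u by simp
      then show ?thesis using ez P_def by simp
    qed
    have Psuf: "suffix P A" by (simp add: P_def suffix_drop)
    have rA: "suffix r A" using v(3) A_def by simp
    have "length P \<le> length r"
    proof (rule ccontr)
      assume "\<not> length P \<le> length r"
      then have "suffix r P" using suffix_both[OF rA Psuf] by simp
      then have "sublist r z" using zPB by (metis sublist_append_rightI suffix_imp_sublist sublist_order.order_trans)
      then have "r = z" using sfD[OF assms(1) v(1) Cons.prems(2)] by simp
      then show False using \<open>\<not> length P \<le> length r\<close> zPB by simp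
    qed
    then have Pr: "suffix P r" using suffix_both[OF Psuf rA] by simp
    have "suffix r (ins A L)" using Cons.IH[OF v(5) v(1)] rA A_def by simp
    then have "suffix r (ins A L @ N)" using v(4) suffix_app_N by blast
    then have "suffix P (ins A L @ N)" using Pr by (metis suffix_order.order_trans)
    then show ?thesis unfolding res zPB by (auto simp: suffix_def)
  qed
qed

lemma sub_l: "sublist x y \<Longrightarrow> sublist x (p @ y)"
  using sublist_order.order_trans[OF _ sublist_append_leftI] by blast
lemma sub_r: "sublist x y \<Longrightarrow> sublist x (y @ p)"
  using sublist_order.order_trans[OF _ sublist_append_rightI] by blast

lemma ins_sublist:
  assumes "sf F" "valid F u L" "z \<in> F" "sublist z u"
  shows "sublist z (ins u L)"
  using assms(2,3,4)
proof (induction L arbitrary: u z)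
  case Nil then show ?case by simp
next
  case (Cons a L)
  obtain e r N where a: "a = (e, r, N)" by (metis prod_cases3)
  note v = valid_Cons[OF Cons.prems(1)[unfolded a]]
  define A where "A = take e u"
  define B where "B = drop e u"
  have u: "u = A @ B" by (simp add: A_def B_def)
  have res: "ins u (a # L) = ins A L @ N @ B" by (simp add: a A_def B_def)
  have rA: "suffix r A" using v(3) A_def by simp
  have sA: "suffix r (ins A L)" using ins_suffix[OF assms(1) v(5) v(1)] rA A_def by simp
  then have sAN: "suffix r (ins A L @ N)" using v(4) suffix_app_N by blast
  obtain q where oq: "occ z (A @ B) q" using Cons.prems(3) u sublist_occ by metis
  from occ_append_cases[OF oq] show ?case
  proof (elim disjE conjE)
    assume "sublist z A"
    then have "sublist z (ins A L)" using Cons.IH[OF v(5) Cons.prems(2)] A_def by simp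
    then show ?thesis unfolding res by (rule sub_r)
  next
    assume "sublist z B"
    then have "sublist z ((ins A L @ N) @ B)" by (rule sub_l)
    then show ?thesis unfolding res by simp
  next
    assume q: "q < length A" "length A < q + length z" "drop q A = take (length A - q) z"
    define P where "P = drop q A"
    have Psuf: "suffix P A" by (simp add: P_def suffix_drop)
    have zeq: "z = P @ take (length z - (length A - q)) B"
    proof -
      have "take (length z) (drop q (A @ B)) = z" using oq by (simp add: occ_def)
      moreover have "drop q (A @ B) = P @ B" using q(1) P_def by simp
      moreover have "length P = length A - q" using P_def by simp
      ultimately show ?thesis using q(2) by simp
    qed
    have "length P \<le> length r"
    proof (rule ccontr)
      assume nle: "\<not> length P \<le> length r"
      then have "suffix r P" using suffix_both[OF rA Psuf] by simp
      then have "sublist r P" by (rule suffix_imp_sublist)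
      then have "sublist r z" using zeq sub_r by metis
      then have "r = z" using sfD[OF assms(1) v(1) Cons.prems(2)] by simp
      moreover have "length P < length z" using P_def q by simp
      ultimately show False using nle by simp
    qed
    then have Pr: "suffix P r" using suffix_both[OF Psuf rA] by simp
    then have "suffix P (ins A L @ N)" using sAN by (metis suffix_order.order_trans)
    then obtain W where W: "ins A L @ N = W @ P" by (auto simp: suffix_def)
    have "ins u (a # L) = W @ P @ B" using res W by simp
    moreover have "sublist (P @ take (length z - (length A - q)) B) (P @ B)"
    proof -
      have "P @ B = (P @ take (length z - (length A - q)) B) @ drop (length z - (length A - q)) B" by simp
      then show ?thesis by (metis sublist_append_rightI)
    qed
    ultimately show ?thesis using zeq sub_l by (metis append_assoc)
  qed
qed

lemma ins_contains:
  assumes "sf F" "valid F u L" "(e, r, N) \<in> set L"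
  shows "sublist (r @ N) (ins u L)"
  using assms(2,3)
proof (induction L arbitrary: u)
  case Nil then show ?case by simp
next
  case (Cons a L)
  obtain e' r' N' where a: "a = (e', r', N')" by (metis prod_cases3)
  note v = valid_Cons[OF Cons.prems(1)[unfolded a]]
  have res: "ins u (a # L) = ins (take e' u) L @ N' @ drop e' u" by (simp add: a)
  show ?case
  proof (cases "(e, r, N) = a")
    case True
    have "suffix r' (ins (take e' u) L)" using ins_suffix[OF assms(1) v(5) v(1) v(3)] .
    then obtain W where "ins (take e' u) L = W @ r'" by (auto simp: suffix_def)
    then have "ins u (a # L) = W @ (r' @ N') @ drop e' u" using res by simp
    moreover have "sublist (r' @ N') (W @ (r' @ N') @ drop e' u)" by (rule sublist_appendI)
    ultimately show ?thesis using True a by simp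
  next
    case False
    then have "(e, r, N) \<in> set L" using Cons.prems(2) by simp
    then have "sublist (r @ N) (ins (take e' u) L)" using Cons.IH[OF v(5)] by simp
    then show ?thesis unfolding res by (rule sub_r)
  qed
qed

lemma ins_length:
  assumes "valid F u L"
  shows "length (ins u L) = length u + sum_list (map (\<lambda>(e, r, N). length N) L)"
  using assms
proof (induction L arbitrary: u)
  case Nil then show ?case by simp
next
  case (Cons a L)
  obtain e r N where a: "a = (e, r, N)" by (metis prod_cases3)
  note v = valid_Cons[OF Cons.prems(1)[unfolded a]]
  have "length (ins u (a # L)) = length (ins (take e u) L) + length N + length (drop e u)" by (simp add: a)
  also have "\<dots> = length (take e u) + sum_list (map (\<lambda>(e, r, N). length N) L) + length N + length (drop e u)"
    using Cons.IH[OF v(5)] by simp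
  finally show ?case using v(2) a by simp
qed

lemma OPT_le: "covers_rc U s \<Longrightarrow> OPT U \<le> length s"
  unfolding OPT_def by (rule Least_le) blast

lemma sublist_concat: "u \<in> set l \<Longrightarrow> sublist u (concat l)"
proof -
  assume "u \<in> set l"
  then obtain l1 l2 where "l = l1 @ u # l2" by (meson split_list)
  then show ?thesis by simp
qed

lemma OPT_attained: "finite U \<Longrightarrow> \<exists>s. covers_rc U s \<and> length s = OPT U"
proof -
  assume "finite U"
  then obtain l where l: "set l = U" using finite_list by blast
  have "covers_rc U (concat l)" unfolding covers_rc_def using l sublist_concat by blast
  then have "\<exists>n s. length s = n \<and> covers_rc U s" by blast
  then have "\<exists>s. length s = OPT U \<and> covers_rc U s" unfolding OPT_def by (rule LeastI_ex)
  then show ?thesis by blast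
qed

lemma verts_cov: "covers_rc S0 u \<Longrightarrow> v \<in> verts S0 \<Longrightarrow> sublist v u \<or> sublist (rc v) u"
  unfolding covers_rc_def verts_def by auto

lemma per_t:
  assumes cov: "covers_rc S0 u" and G: "Good (verts S0) t"
  shows "\<exists>e r N. r \<in> verts S0 \<and> e \<le> length u \<and> suffix r (take e u) \<and> suffix r (r @ N) \<and>
      (sublist t (r @ N) \<or> sublist (rc t) (r @ N)) \<and> length N \<le> dist t t"
proof -
  obtain v where v: "v \<in> verts S0" "prefix v t" "t \<noteq> [] \<longrightarrow> ov t t < length v"
    using G by (auto simp: Good_def)
  define Z where "Z = merge t v"
  have pv: "prefix v Z" using v(2) prefix_merge[of t v] Z_def by (metis prefix_order.order_trans)
  have sv: "suffix v Z" using suffix_merge Z_def by simp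
  have tZ: "sublist t Z" using prefix_merge Z_def by simp
  have ovge: "ov t t \<le> ov t v"
  proof (cases "ov t t = 0")
    case False
    then have p: "ovp t t (ov t t)" using ov_cases by metis
    have tne: "t \<noteq> []"
    proof
      assume "t = []"
      then have "ov t t \<le> 0" using ov_le1[of t t] by simp
      then show False using False by simp
    qed
    then have lt: "ov t t < length v" using v(3) by simp
    have "take (ov t t) t = take (ov t t) v" using v(2) lt
      by (metis prefix_def take_append less_imp_le_nat append_eq_conv_conj take_take min.absorb1)
    then have "ovp t v (ov t t)" using p lt by (simp add: ovp_def)
    then show ?thesis by (rule ov_ge)
  qed simp
  have lZ: "length Z = length t + length v - ov t v" using Z_def length_merge by simp
  have lN: "length Z - length v \<le> dist t t"
    using lZ ovge ov_le1[of t v] by (simp add: dist_def)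
  have occ_end: "\<exists>e. e \<le> length u \<and> suffix r (take e u)" if sr: "sublist r u" for r
  proof -
    obtain p s where "u = p @ r @ s" using sr unfolding sublist_def by blast
    then have "length p + length r \<le> length u \<and> suffix r (take (length p + length r) u)"
      by (simp add: suffix_def)
    then show ?thesis by blast
  qed
  from verts_cov[OF cov v(1)] show ?thesis
  proof
    assume "sublist v u"
    then obtain e where e: "e \<le> length u" "suffix v (take e u)" using occ_end by blast
    define N where "N = drop (length v) Z"
    have vN: "v @ N = Z" using pv N_def by (metis append_take_drop_id prefix_def append_eq_conv_conj)
    show ?thesis
      by (rule exI[of _ e], rule exI[of _ v], rule exI[of _ N]) (use v(1) e vN sv tZ lN N_def in simp)
  next
    assume "sublist (rc v) u"
    then obtain e where e: "e \<le> length u" "suffix (rc v) (take e u)" using occ_end by blast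
    define N where "N = drop (length v) (rc Z)"
    have p2: "prefix (rc v) (rc Z)" using suffix_rc[OF sv] .
    have s2: "suffix (rc v) (rc Z)" using prefix_rc[OF pv] .
    have vN: "rc v @ N = rc Z" using p2 N_def
      by (metis append_take_drop_id prefix_def append_eq_conv_conj length_rc)
    have rv: "rc v \<in> verts S0" using v(1) verts_rc by blast
    have "sublist (rc t) (rc Z)" using sublist_rc[OF tZ] .
    show ?thesis
      by (rule exI[of _ e], rule exI[of _ "rc v"], rule exI[of _ N])
         (use rv e vN s2 \<open>sublist (rc t) (rc Z)\<close> lN N_def in simp)
  qed
qed

lemma OPT_bound:
  assumes cov: "covers_rc S0 u" and sfV: "sf (verts S0)" and fin: "finite T"
    and G: "\<forall>t\<in>T. Good (verts S0) t"
  shows "OPT T \<le> length u + (\<Sum>t\<in>T. dist t t)"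
proof -
  define P where "P = (\<lambda>t (x :: nat \<times> dna \<times> dna). case x of (e, r, N) \<Rightarrow>
      r \<in> verts S0 \<and> e \<le> length u \<and> suffix r (take e u) \<and> suffix r (r @ N) \<and>
      (sublist t (r @ N) \<or> sublist (rc t) (r @ N)) \<and> length N \<le> dist t t)"
  have "\<forall>t\<in>T. \<exists>x. P t x"
  proof
    fix t assume "t \<in> T"
    then obtain e r N where "r \<in> verts S0 \<and> e \<le> length u \<and> suffix r (take e u) \<and> suffix r (r @ N) \<and>
      (sublist t (r @ N) \<or> sublist (rc t) (r @ N)) \<and> length N \<le> dist t t"
      using per_t[OF cov] G by blast
    then have "P t (e, r, N)" by (simp add: P_def)
    then show "\<exists>x. P t x" ..
  qed
  then obtain f where f: "\<forall>t\<in>T. P t (f t)" by (metis bchoice)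
  obtain Tl where Tl: "set Tl = T" "distinct Tl" using finite_distinct_list[OF fin] by blast
  define L0 where "L0 = map f Tl"
  define L where "L = rev (sort_key fst L0)"
  have setL: "set L = f ` T" using Tl by (simp add: L_def L0_def)
  have msL: "mset L = mset L0" by (simp add: L_def)
  have sorted: "sorted_wrt (\<lambda>a b. fst b \<le> fst a) L"
  proof -
    have "sorted (map fst (sort_key fst L0))" by simp
    then have "sorted_wrt (\<lambda>a b. fst a \<le> fst b) (sort_key fst L0)" by (simp add: sorted_map)
    then show ?thesis by (simp add: L_def sorted_wrt_rev)
  qed
  have vL: "valid (verts S0) u L"
    unfolding valid_def
  proof (intro conjI ballI)
    fix x assume "x \<in> set L"
    then obtain t where t: "t \<in> T" "x = f t" using setL by auto
    then have "P t x" using f by simp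
    then show "case x of (e, r, N) \<Rightarrow> r \<in> verts S0 \<and> e \<le> length u \<and> suffix r (take e u) \<and> suffix r (r @ N)"
      by (cases x) (simp add: P_def)
  qed (rule sorted)
  define w where "w = ins u L"
  have "covers_rc T w"
    unfolding covers_rc_def
  proof
    fix t assume t: "t \<in> T"
    obtain e r N where fe: "f t = (e, r, N)" by (metis prod_cases3)
    have Pt: "P t (e, r, N)" using f t fe by metis
    have "(e, r, N) \<in> set L" using setL t fe by (metis image_eqI)
    then have s: "sublist (r @ N) w" unfolding w_def by (rule ins_contains[OF sfV vL])
    have "sublist t (r @ N) \<or> sublist (rc t) (r @ N)" using Pt by (simp add: P_def)
    then show "sublist t w \<or> sublist (rc t) w" using s sublist_order.order_trans by blast
  qed
  then have "OPT T \<le> length w" by (rule OPT_le)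
  also have "length w = length u + sum_list (map (\<lambda>(e, r, N). length N) L)"
    unfolding w_def by (rule ins_length[OF vL])
  also have "sum_list (map (\<lambda>(e, r, N). length N) L) = sum_list (map (\<lambda>(e, r, N). length N) L0)"
    using msL by (metis mset_map sum_mset_sum_list)
  also have "\<dots> = (\<Sum>t\<in>T. (\<lambda>(e, r, N). length N) (f t))"
    using Tl by (simp add: L0_def sum_list_distinct_conv_sum_set)
  also have "\<dots> \<le> (\<Sum>t\<in>T. dist t t)"
  proof (rule sum_mono)
    fix t assume t: "t \<in> T"
    obtain e r N where fe: "f t = (e, r, N)" by (metis prod_cases3)
    have "P t (e, r, N)" using f t fe by metis
    then show "(\<lambda>(e, r, N). length N) (f t) \<le> dist t t" using fe by (simp add: P_def)
  qed
  finally show ?thesis by simp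
qed

lemma occ_take: "occ a u p \<Longrightarrow> a = take (length a) (drop p u)" by (simp add: occ_def)

lemma pair_dist:
  assumes sfF: "sf F" and ab: "a \<in> F" "b \<in> F" "a \<noteq> b"
    and oa: "occ a u pa" and ob: "occ b u pb" and le: "pa \<le> pb"
  shows "dist a b + pa \<le> pb"
proof -
  have ea: "a = take (length a) (drop pa u)" using oa by (simp add: occ_def)
  have eb: "b = take (length b) (drop pb u)" using ob by (simp add: occ_def)
  have la: "pa + length a \<le> length u" using oa by (simp add: occ_def)
  have lb: "pb + length b \<le> length u" using ob by (simp add: occ_def)
  have dle: "dist a b \<le> length a" by (simp add: dist_def)
  have da: "drop (pb - pa) a = take (length a - (pb - pa)) (drop pb u)"
  proof -
    have "drop (pb - pa) a = take (length a - (pb - pa)) (drop (pb - pa) (drop pa u))"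
      by (subst ea) (simp add: drop_take)
    also have "drop (pb - pa) (drop pa u) = drop pb u" using le by simp
    finally show ?thesis .
  qed
  have neq: "pa \<noteq> pb"
  proof
    assume "pa = pb"
    then have a2: "a = take (length a) (drop pb u)" using ea by simp
    show False
    proof (cases "length a \<le> length b")
      case True
      then have "prefix a b" using a2 eb
        by (metis prefixI take_add le_add_diff_inverse)
      then show False using sfD[OF sfF ab(1,2)] ab(3) prefix_imp_sublist by blast
    next
      case False
      then have "prefix b a" using a2 eb
        by (metis prefixI take_add le_add_diff_inverse nat_le_linear)
      then show False using sfD[OF sfF ab(2,1)] ab(3) prefix_imp_sublist by blast
    qed
  qed
  show ?thesis
  proof (cases "pa + length a \<le> pb")
    case True then show ?thesis using dle by simp
  next
    case False
    define k where "k = pa + length a - pb"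
    have k1: "0 < k" "k < length a" using False neq le k_def by auto
    have k2: "k < length b"
    proof (rule ccontr)
      assume "\<not> k < length b"
      then have lbk: "length b \<le> length a - (pb - pa)" using k_def le False by simp
      have "take (length b) (drop (pb - pa) a) = take (length b) (drop pb u)" using da lbk by (simp add: min_def)
      then have "take (length b) (drop (pb - pa) a) = b" using eb by simp
      then have "sublist b a" by (metis sublist_take sublist_drop sublist_order.order_trans)
      then show False using sfD[OF sfF ab(2,1)] ab(3) by simp
    qed
    have kk: "length a - k = pb - pa" using k_def le False by simp
    have kk2: "length a - (pb - pa) = k" using k_def le False by simp
    have "drop (length a - k) a = take k (drop pb u)" using da kk kk2 by simp
    moreover have "take k b = take k (drop pb u)"
    proof -
      have "take k b = take k (take (length b) (drop pb u))" using arg_cong[OF eb, of "take k"] .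
      then show ?thesis using k2 by (simp add: min_def)
    qed
    ultimately have "ovp a b k" using k1 k2 by (simp add: ovp_def)
    then have "k \<le> ov a b" by (rule ov_ge)
    then have "length a - ov a b \<le> length a - k" by simp
    then have "dist a b \<le> pb - pa" using kk by (simp add: dist_def)
    then show ?thesis using le by simp
  qed
qed

lemma cyc_bound:
  assumes sfF: "sf F" and lF: "set l \<subseteq> F" and dl: "distinct l" and ne: "l \<noteq> []"
    and oc: "\<forall>x\<in>set l. occ x u (pos x)" and so: "sorted (map pos l)"
  shows "cycle_weight l \<le> length u"
proof -
  obtain m where m: "length l = Suc m" using ne by (cases l) auto
  have inl: "i < length l \<Longrightarrow> l ! i \<in> set l" for i by simp
  have mono: "i \<le> j \<Longrightarrow> j < length l \<Longrightarrow> pos (l ! i) \<le> pos (l ! j)" for i j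
    using so by (simp add: sorted_iff_nth_mono)
  have cw: "cycle_weight l = (\<Sum>i<m. dist (l ! i) (l ! Suc i)) + dist (l ! m) (l ! 0)"
  proof -
    have "cycle_weight l = (\<Sum>i<Suc m. dist (l ! i) (l ! ((i + 1) mod Suc m)))"
      unfolding cycle_weight_def m ..
    also have "\<dots> = (\<Sum>i<m. dist (l ! i) (l ! ((i + 1) mod Suc m))) + dist (l ! m) (l ! ((m + 1) mod Suc m))"
      by simp
    also have "(\<Sum>i<m. dist (l ! i) (l ! ((i + 1) mod Suc m))) = (\<Sum>i<m. dist (l ! i) (l ! Suc i))"
      by (rule sum.cong) auto
    finally show ?thesis by simp
  qed
  have tele: "k \<le> m \<Longrightarrow> (\<Sum>i<k. dist (l ! i) (l ! Suc i)) + pos (l ! 0) \<le> pos (l ! k)" for k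
  proof (induction k)
    case 0 then show ?case by simp
  next
    case (Suc k)
    have k1: "k < length l" "Suc k < length l" using Suc.prems m by auto
    have neq: "l ! k \<noteq> l ! Suc k" using dl k1 by (simp add: nth_eq_iff_index_eq)
    have "dist (l ! k) (l ! Suc k) + pos (l ! k) \<le> pos (l ! Suc k)"
      by (rule pair_dist[OF sfF _ _ neq])
         (use lF inl[OF k1(1)] inl[OF k1(2)] oc mono[of k "Suc k"] k1 in auto)
    then show ?case using Suc by simp
  qed
  have t: "(\<Sum>i<m. dist (l ! i) (l ! Suc i)) + pos (l ! 0) \<le> pos (l ! m)" using tele by simp
  have lm: "m < length l" using m by simp
  have "occ (l ! m) u (pos (l ! m))" using oc inl[OF lm] by blast
  then have e: "pos (l ! m) + length (l ! m) \<le> length u" by (simp add: occ_def)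
  have d: "dist (l ! m) (l ! 0) \<le> length (l ! m)" by (simp add: dist_def)
  show ?thesis using cw t e d by simp
qed

lemma wCYC_le_OPT:
  assumes fin: "finite S0" and sfV: "sf (verts S0)"
  shows "wCYC S0 \<le> OPT S0"
proof (cases "S0 = {}")
  case True
  have "is_cycle_cover S0 []" using True by (simp add: cover_iff good_def)
  then have "wCYC S0 \<le> cover_weight []" by (rule wCYC_le)
  then show ?thesis by simp
next
  case False
  obtain u where cov: "covers_rc S0 u" and lu: "length u = OPT S0" using OPT_attained[OF fin] by blast
  define cls where "cls = (\<lambda>s::dna. {s, rc s})"
  define rep where "rep = (\<lambda>s. SOME x. x \<in> cls s \<and> sublist x u)"
  have rep_ok: "rep s \<in> cls s \<and> sublist (rep s) u" if s: "s \<in> S0" for s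
  proof -
    have "\<exists>x. x \<in> cls s \<and> sublist x u" using cov s unfolding covers_rc_def cls_def by blast
    then show ?thesis unfolding rep_def by (rule someI_ex)
  qed
  have cls_eq: "y \<in> cls a \<Longrightarrow> cls y = cls a" for y a unfolding cls_def by auto
  have rep_cls: "cls a = cls b \<Longrightarrow> rep a = rep b" for a b unfolding rep_def by simp
  define Ov where "Ov = rep ` S0"
  define pos where "pos = (\<lambda>x. LEAST p. occ x u p)"
  have pos_ok: "occ x u (pos x)" if x: "x \<in> Ov" for x
  proof -
    obtain s where s: "s \<in> S0" "x = rep s" using x Ov_def by blast
    then have "sublist x u" using rep_ok[OF s(1)] by simp
    then have "\<exists>p. occ x u p" using sublist_occ by blast
    then show ?thesis unfolding pos_def by (rule LeastI_ex)
  qed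
  have Ovsub: "Ov \<subseteq> verts S0"
  proof
    fix x assume "x \<in> Ov"
    then obtain s where s: "s \<in> S0" "x = rep s" using Ov_def by blast
    then have "x \<in> cls s" using rep_ok[OF s(1)] by simp
    then show "x \<in> verts S0" using s(1) by (auto simp: cls_def verts_def)
  qed
  have g: "good S0 Ov"
    unfolding good_def
  proof (intro conjI ballI impI)
    show "Ov \<subseteq> verts S0" by (rule Ovsub)
  next
    fix s assume s: "s \<in> S0"
    then have "rep s \<in> Ov" "rep s \<in> cls s" using rep_ok[OF s] unfolding Ov_def by auto
    then show "s \<in> Ov \<or> rc s \<in> Ov" by (auto simp: cls_def)
  next
    fix x assume x: "x \<in> Ov" and rx: "rc x \<in> Ov"
    obtain s where s: "s \<in> S0" "x = rep s" using x Ov_def by blast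
    obtain s' where s': "s' \<in> S0" "rc x = rep s'" using rx Ov_def by blast
    have "x \<in> cls s" using rep_ok[OF s(1)] s(2) by simp
    then have "rc x \<in> cls s" by (auto simp: cls_def)
    then have c1: "cls (rc x) = cls s" by (rule cls_eq)
    have "rc x \<in> cls s'" using rep_ok[OF s'(1)] s'(2) by simp
    then have c2: "cls (rc x) = cls s'" by (rule cls_eq)
    have "cls s = cls s'" using c1 c2 by simp
    then have "rep s = rep s'" by (rule rep_cls)
    then show "rc x = x" using s s' by simp
  qed
  have finOv: "finite Ov" unfolding Ov_def using fin by (rule finite_imageI)
  obtain l0 where l0: "set l0 = Ov" "distinct l0" using finite_distinct_list[OF finOv] by blast
  define l where "l = sort_key pos l0"
  have sl1: "set l = Ov" unfolding l_def using l0(1) by simp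
  have sl2: "distinct l" unfolding l_def using l0(2) by simp
  have sl3: "sorted (map pos l)" unfolding l_def by simp
  note sl = sl1 sl2 sl3
  have "Ov \<noteq> {}" unfolding Ov_def using False by simp
  then have lne: "l \<noteq> []" using sl1 by auto
  have g2: "good S0 (set (concat [l]))" using g sl1 by simp
  have cv: "is_cycle_cover S0 [l]" unfolding cover_iff using lne sl2 g2 by simp
  have "cycle_weight l \<le> length u"
    by (rule cyc_bound[OF sfV _ sl(2) lne _ sl(3)]) (use sl(1) Ovsub pos_ok in auto)
  then show ?thesis using wCYC_le[OF cv] lu by simp
qed

theorem lemma15:
  fixes S T :: "dna set"
  assumes "scs_rc_instance S"
    and "mgreedy_rc S T"
  shows "OPT T \<le> OPT S + wCYC S \<and> OPT S + wCYC S \<le> 2 * OPT S"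
proof -
  have fin: "finite S" using assms(1) by (simp add: scs_rc_instance_def)
  have sfV: "sf (verts S)" using assms(1) by (simp add: scs_rc_instance_def sf_def)
  have run: "mgreedy_run S {} T" using assms(2) by (simp add: mgreedy_rc_def)
  have I: "Inv (verts S) S" by (rule Inv_init[OF fin sfV])
  have R: "finite T \<and> (\<forall>t\<in>T. Good (verts S) t) \<and> (\<Sum>t\<in>T. dist t t) \<le> (\<Sum>t\<in>{}. dist t t) + wCYC S"
    by (rule run_main[OF run sfV I]) simp_all
  obtain u where cov: "covers_rc S u" and lu: "length u = OPT S" using OPT_attained[OF fin] by blast
  have "OPT T \<le> length u + (\<Sum>t\<in>T. dist t t)"
    by (rule OPT_bound[OF cov sfV]) (use R in auto)
  then have 1: "OPT T \<le> OPT S + wCYC S" using R lu by simp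
  have 2: "wCYC S \<le> OPT S" by (rule wCYC_le_OPT[OF fin sfV])
  show ?thesis using 1 2 by simp
qed

end
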